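(* Let $n \ge 3$ and let $S_{3,2}$ be the set of compositions of length $n-1$ of the form $\alpha = (3, 1, \ldots, 1, 2, 1, \ldots, 1)$ with first entry $3$, entry $2$ in position $k+1$ for some $k \in [1, n-2]$, and all other entries $1$. Then for every prime $p$, \begin{align*} \sum_{\alpha \in S_{3, 2}} g_\alpha(p) &= \frac{1}{6(p-1)}\bigg(6(n-1)p^{2n-5} + (n-1)(n-2)(n-3)p^{n} - 3(n-1)(n-2)(n-4)p^{n-1} \\ &\quad +(n-1)(n-2)(5n-24) p^{n-2} - 3(n-1)(n-3)(n-4)p^{n-3}\bigg). \end{align*}
   Context: For a composition $\alpha=(e_1,\ldots,e_{n-1})$ (positive integers), $g_\alpha(p)$ is the number of $n\times n$ irreducible subring matrices with diagonal $(p^{e_1},\ldots,p^{e_{n-1}},1)$: upper triangular integer matrices $A$ with $A_{rr}=p^{e_r}$ ($r<n$), $A_{nn}=1$, last column $(1,\ldots,1)^T$, entries $A_{rs}=p\,a_{rs}$ for $1\le r<s\le n-1$ with integers $0\le p\,a_{rs}<p^{e_r}$, such that for all columns $v_i,v_j$ of $A$ the componentwise product $v_i\circ v_j$ lies in the $\mathbb{Z}$-column span of $A$. *)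

theory Defs
  imports Complex_Main "HOL-Computational_Algebra.Primes"
begin

text \<open>Matrices are represented 0-based as functions nat => nat => int, with
  entries outside the n x n block equal to 0. A composition is a list of
  positive naturals; alpha = (e_1,...,e_{n-1}) with n = length alpha + 1.\<close>

definition in_col_span :: "nat \<Rightarrow> (nat \<Rightarrow> nat \<Rightarrow> int) \<Rightarrow> (nat \<Rightarrow> int) \<Rightarrow> bool" where
  "in_col_span n A w \<longleftrightarrow> (\<exists>c :: nat \<Rightarrow> int. \<forall>r<n. w r = (\<Sum>s<n. c s * A r s))"

definition irred_subring_matrix :: "nat list \<Rightarrow> nat \<Rightarrow> (nat \<Rightarrow> nat \<Rightarrow> int) \<Rightarrow> bool" where
  "irred_subring_matrix \<alpha> p A \<longleftrightarrow>
     (let n = length \<alpha> + 1 in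
       (\<forall>r s. (n \<le> r \<or> n \<le> s) \<longrightarrow> A r s = 0) \<and>
       (\<forall>r<n. \<forall>s<r. A r s = 0) \<and>
       (\<forall>r<n - 1. A r r = int p ^ (\<alpha> ! r)) \<and>
       A (n - 1) (n - 1) = 1 \<and>
       (\<forall>r<n. A r (n - 1) = 1) \<and>
       (\<forall>r s. r < s \<and> s < n - 1 \<longrightarrow>
          int p dvd A r s \<and> 0 \<le> A r s \<and> A r s < int p ^ (\<alpha> ! r)) \<and>
       (\<forall>i<n. \<forall>j<n. in_col_span n A (\<lambda>r. A r i * A r j)))"

definition g :: "nat list \<Rightarrow> nat \<Rightarrow> nat" where
  "g \<alpha> p = card {A. irred_subring_matrix \<alpha> p A}"

definition is_composition :: "nat list \<Rightarrow> bool" where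
  "is_composition \<alpha> \<longleftrightarrow> (\<forall>e\<in>set \<alpha>. 0 < e)"

definition S32 :: "nat \<Rightarrow> nat list set" where
  "S32 n = {\<alpha>. is_composition \<alpha> \<and> length \<alpha> = n - 1 \<and> \<alpha> ! 0 = 3 \<and>
             (\<exists>k\<in>{1..n-2}. \<alpha> ! k = 2 \<and> (\<forall>i<n - 1. i \<noteq> 0 \<and> i \<noteq> k \<longrightarrow> \<alpha> ! i = 1))}"

end

theory Submission
  imports Defs "HOL-Number_Theory.Cong" "HOL-Library.FuncSet"
begin

definition Fz :: "nat set \<Rightarrow> int set \<Rightarrow> (nat \<Rightarrow> int) set" where
  "Fz I V = {f. (\<forall>i\<in>I. f i \<in> V) \<and> (\<forall>i. i \<notin> I \<longrightarrow> f i = 0)}"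

lemma card_Fz:
  assumes "finite I" shows "card (Fz I V) = card V ^ card I"
proof -
  have "bij_betw (\<lambda>f. restrict f I) (Fz I V) (I \<rightarrow>\<^sub>E V)"
  proof (rule bij_betw_byWitness[where f'="\<lambda>f i. if i \<in> I then f i else 0"])
    show "\<forall>a\<in>Fz I V. (\<lambda>i. if i \<in> I then restrict a I i else 0) = a"
      by (auto simp: Fz_def fun_eq_iff)
    show "\<forall>a'\<in>I \<rightarrow>\<^sub>E V. restrict (\<lambda>i. if i \<in> I then a' i else 0) I = a'"
      by (auto simp: fun_eq_iff PiE_def extensional_def)
    show "(\<lambda>f. restrict f I) ` Fz I V \<subseteq> I \<rightarrow>\<^sub>E V" by (auto simp: Fz_def)
    show "(\<lambda>f i. if i \<in> I then f i else 0) ` (I \<rightarrow>\<^sub>E V) \<subseteq> Fz I V" by (auto simp: Fz_def)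
  qed
  then have "card (Fz I V) = card (I \<rightarrow>\<^sub>E V)" by (rule bij_betw_same_card)
  also have "\<dots> = card V ^ card I" using assms by (rule card_funcsetE)
  finally show ?thesis .
qed

lemma finite_Fz: assumes "finite I" "finite V" shows "finite (Fz I V)"
proof -
  have "Fz I V \<subseteq> (\<lambda>f i. if i \<in> I then f i else 0) ` (I \<rightarrow>\<^sub>E V)"
  proof
    fix f assume f: "f \<in> Fz I V"
    have "f = (\<lambda>i. if i \<in> I then restrict f I i else 0)" using f by (auto simp: Fz_def fun_eq_iff)
    moreover have "restrict f I \<in> I \<rightarrow>\<^sub>E V" using f by (auto simp: Fz_def)
    ultimately show "f \<in> (\<lambda>f i. if i \<in> I then f i else 0) ` (I \<rightarrow>\<^sub>E V)" by blast
  qed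
  moreover have "finite (I \<rightarrow>\<^sub>E V)" using assms by (simp add: finite_PiE)
  ultimately show ?thesis by (meson finite_surj)
qed

locale primeint =
  fixes p :: int
  assumes pp: "prime p"
begin

lemma p2: "p \<ge> 2" using pp by (simp add: prime_ge_2_int)

lemma dvd_range: "0 \<le> x \<Longrightarrow> x < p \<Longrightarrow> p dvd x \<longleftrightarrow> x = 0"
  using zdvd_not_zless[of x p] by (cases "x = 0") auto

lemma dvd_mult: "p dvd a * b \<longleftrightarrow> p dvd a \<or> p dvd b"
  using pp by (simp add: prime_dvd_mult_iff)

lemma idem_range: assumes "0 \<le> x" "x < p" shows "p dvd x^2 - x \<longleftrightarrow> x = 0 \<or> x = 1"
proof -
  have "x^2 - x = x * (x - 1)" by (simp add: power2_eq_square algebra_simps)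
  hence "p dvd x^2 - x \<longleftrightarrow> p dvd x \<or> p dvd (x - 1)" by (simp add: dvd_mult)
  moreover have "p dvd x \<longleftrightarrow> x = 0" using dvd_range assms by auto
  moreover have "p dvd (x - 1) \<longleftrightarrow> x = 1"
  proof
    assume "p dvd x - 1"
    show "x = 1"
    proof (cases "x = 0")
      case True
      with \<open>p dvd x - 1\<close> have "p dvd 1" by (simp add: dvd_minus_iff)
      with p2 show ?thesis by (simp add: zdvd1_eq) 
    next
      case False
      with assms have "0 \<le> x - 1" "x - 1 < p" by auto
      with \<open>p dvd x - 1\<close> dvd_range show ?thesis by auto
    qed
  qed simp
  ultimately show ?thesis by auto
qed

definition OH :: "nat set \<Rightarrow> (nat \<Rightarrow> int) set" where
  "OH Q = {x \<in> Fz Q {0..<p}. (\<forall>i\<in>Q. p dvd x i ^ 2 - x i) \<and> (\<forall>i\<in>Q. \<forall>j\<in>Q. i \<noteq> j \<longrightarrow> p dvd x i * x j)}"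

definition delta :: "nat \<Rightarrow> int \<Rightarrow> nat \<Rightarrow> int" where
  "delta j c = (\<lambda>i. if i = j then c else 0)"

lemma OH_eq: "OH Q = insert (\<lambda>_. 0) ((\<lambda>j. delta j 1) ` Q)"
proof (rule set_eqI, rule iffI)
  fix x assume x: "x \<in> OH Q"
  hence r: "\<forall>i\<in>Q. 0 \<le> x i \<and> x i < p" and z: "\<forall>i. i \<notin> Q \<longrightarrow> x i = 0"
    and id: "\<forall>i\<in>Q. p dvd x i ^ 2 - x i" and pr: "\<forall>i\<in>Q. \<forall>j\<in>Q. i \<noteq> j \<longrightarrow> p dvd x i * x j"
    by (auto simp: OH_def Fz_def)
  have v: "\<forall>i\<in>Q. x i = 0 \<or> x i = 1" using r id idem_range by simp
  have pr': "\<forall>i\<in>Q. \<forall>j\<in>Q. i \<noteq> j \<longrightarrow> x i = 0 \<or> x j = 0"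
  proof (intro ballI impI)
    fix i j assume "i \<in> Q" "j \<in> Q" "i \<noteq> j"
    hence "p dvd x i \<or> p dvd x j" using pr dvd_mult by blast
    thus "x i = 0 \<or> x j = 0" using r \<open>i \<in> Q\<close> \<open>j \<in> Q\<close> dvd_range by blast
  qed
  show "x \<in> insert (\<lambda>_. 0) ((\<lambda>j. delta j 1) ` Q)"
  proof (cases "\<exists>j\<in>Q. x j \<noteq> 0")
    case True
    then obtain j where j: "j \<in> Q" "x j \<noteq> 0" by blast
    have "x = delta j 1"
    proof
      fix i show "x i = delta j 1 i"
        using j v pr' z by (cases "i \<in> Q") (auto simp: delta_def)
    qed
    thus ?thesis using j by blast
  next
    case False
    hence "x = (\<lambda>_. 0)" using z by (auto simp: fun_eq_iff)
    thus ?thesis by simp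
  qed
next
  fix x assume "x \<in> insert (\<lambda>_. 0) ((\<lambda>j. delta j 1) ` Q)"
  then show "x \<in> OH Q" using p2
    by (auto simp: OH_def Fz_def delta_def)
qed

lemma card_OH: assumes "finite Q" shows "card (OH Q) = card Q + 1"
proof -
  have i: "inj_on (\<lambda>j. delta j (1::int)) Q" by (auto simp: inj_on_def delta_def fun_eq_iff split: if_splits)
  have n: "(\<lambda>_. 0) \<notin> (\<lambda>j. delta j (1::int)) ` Q"
  proof
    assume "(\<lambda>_. 0) \<in> (\<lambda>j. delta j (1::int)) ` Q"
    then obtain j where "(\<lambda>_. 0) = delta j (1::int)" by blast
    hence "(0::int) = delta j 1 j" by metis
    thus False by (simp add: delta_def)
  qed
  have "card (OH Q) = card ((\<lambda>j. delta j (1::int)) ` Q) + 1"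
    unfolding OH_eq using n assms by simp
  also have "\<dots> = card Q + 1" using card_image[OF i] by simp
  finally show ?thesis .
qed

end

lemma dvd_lin2: "(p::int) dvd A \<Longrightarrow> p dvd B \<Longrightarrow> X = c*A + d*B \<Longrightarrow> p dvd X"
  by simp

context primeint begin

lemma L1:
  assumes u: "\<not> p dvd u" and nz: "\<not> (p dvd xl \<and> p dvd yl)"
    and o1: "p dvd xi*xl - u*yi*yl" and o2: "p dvd xj*xl - u*yj*yl"
  shows "p dvd xi*yj - xj*yi"
proof -
  have a: "p dvd xl*(xi*yj - xj*yi)"
    by (rule dvd_lin2[OF o1 o2, of _ yj "-yi"]) (simp add: algebra_simps)
  have b: "p dvd (u*yl)*(xi*yj - xj*yi)"
    by (rule dvd_lin2[OF o1 o2, of _ xj "-xi"]) (simp add: algebra_simps)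
  show ?thesis
  proof (cases "p dvd xl")
    case False thus ?thesis using a dvd_mult by blast
  next
    case True
    hence "\<not> p dvd yl" using nz by blast
    hence "\<not> p dvd u*yl" using u dvd_mult by blast
    thus ?thesis using b dvd_mult by blast
  qed
qed

lemma L2:
  assumes nz: "\<not> (p dvd xj \<and> p dvd yj)"
    and o: "p dvd xi*xj - u*yi*yj" and par: "p dvd xi*yj - xj*yi"
  shows "p dvd xi^2 - u*yi^2"
proof -
  have a: "p dvd xj*(xi^2 - u*yi^2)"
    by (rule dvd_lin2[OF o par, of _ xi "u*yi"]) (simp add: algebra_simps power2_eq_square)
  have b: "p dvd yj*(xi^2 - u*yi^2)"
    by (rule dvd_lin2[OF o par, of _ yi xi]) (simp add: algebra_simps power2_eq_square)
  show ?thesis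
  proof (cases "p dvd xj")
    case False thus ?thesis using a dvd_mult by blast
  next
    case True
    hence "\<not> p dvd yj" using nz by blast
    thus ?thesis using b dvd_mult by blast
  qed
qed

lemma L3:
  assumes nz: "\<not> (p dvd xi \<and> p dvd yi)" and iso: "p dvd xi^2 - u*yi^2"
    and inS: "p dvd xi^2 - xi - u*(yi^2 - yi)" and u: "\<not> p dvd u"
  shows "p dvd u - 1 \<and> p dvd xi - yi"
proof -
  have D: "p dvd xi - u*yi"
    by (rule dvd_lin2[OF iso inS, of _ 1 "-1"]) (simp add: algebra_simps)
  have "p dvd (u*(u-1))*(yi*yi)"
    by (rule dvd_lin2[OF iso D, of _ 1 "-(xi + u*yi)"]) (simp add: algebra_simps power2_eq_square)
  hence "p dvd u \<or> p dvd u - 1 \<or> p dvd yi" using dvd_mult by blast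
  moreover have "\<not> p dvd yi"
  proof
    assume "p dvd yi"
    hence "p dvd xi" using D by (metis dvd_diff_commute dvd_mult dvd_diff dvd_add_right_iff
          diff_add_cancel)
    thus False using nz \<open>p dvd yi\<close> by blast
  qed
  ultimately have pu: "p dvd u - 1" using u by blast
  have "p dvd xi - yi"
    by (rule dvd_lin2[OF D pu, of _ 1 yi]) (simp add: algebra_simps)
  with pu show ?thesis by blast
qed

lemma L4:
  assumes "p dvd u - 1" "p dvd xi - yi" "\<not> p dvd xi" "p dvd xi*xm - u*yi*ym"
  shows "p dvd xm - ym"
proof -
  have "p dvd (xi*xm - u*yi*ym) + (ym*yi)*(u - 1) + (-ym)*(xi - yi)"
    using assms by (intro dvd_add dvd_mult) auto
  moreover have "(xi*xm - u*yi*ym) + (ym*yi)*(u - 1) + (-ym)*(xi - yi) = xi * (xm - ym)"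
    by (simp add: algebra_simps)
  ultimately have "p dvd xi * (xm - ym)" by simp
  thus ?thesis using assms(3) dvd_mult by blast
qed

end

context primeint begin

lemma inv_ex: assumes "\<not> p dvd c" shows "\<exists>t. p dvd c*t - 1"
proof -
  have "coprime p c" using pp assms by (rule prime_imp_coprime_int)
  hence "coprime c p" by (simp add: coprime_commute)
  then obtain t where "[c * t = 1] (mod p)" using cong_solve_coprime_int by blast
  thus ?thesis by (auto simp: cong_iff_dvd_diff)
qed

lemma range_eq: assumes "u \<in> {0..<p}" "v \<in> {0..<p}" "p dvd u - v" shows "u = v"
proof -
  have "u mod p = v mod p" using assms(3) by (simp add: mod_eq_dvd_iff)
  thus ?thesis using assms(1,2) by simp
qed

lemma solve_ex: assumes "\<not> p dvd c" shows "\<exists>u\<in>{0..<p}. p dvd d - u*c"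
proof -
  obtain t where t: "p dvd c*t - 1" using inv_ex assms by blast
  have "[((d*t) mod p)*c = d*(c*t)] (mod p)"
  proof -
    have "[((d*t) mod p)*c = (d*t)*c] (mod p)" by (intro cong_mult cong_refl) (simp add: cong_def)
    thus ?thesis by (simp add: ac_simps)
  qed
  moreover have "[d*(c*t) = d*1] (mod p)" using t by (intro cong_mult cong_refl) (simp add: cong_iff_dvd_diff)
  ultimately have "[((d*t) mod p)*c = d] (mod p)" by (metis cong_trans mult.right_neutral)
  hence "p dvd d - ((d*t) mod p)*c" by (simp add: cong_iff_dvd_diff dvd_diff_commute)
  moreover have "(d*t) mod p \<in> {0..<p}" using p2 by simp
  ultimately show ?thesis by blast
qed

lemma solve_uniq:
  assumes "\<not> p dvd c" "u\<in>{0..<p}" "v\<in>{0..<p}" "p dvd d - u*c" "p dvd d - v*c"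
  shows "u = v"
proof -
  have "p dvd (d - v*c) - (d - u*c)" using assms(4,5) by (rule dvd_diff[rotated])
  hence "p dvd (u - v)*c" by (simp add: algebra_simps)
  hence "p dvd u - v" using assms(1) dvd_mult by blast
  thus ?thesis using range_eq assms(2,3) by blast
qed

definition T1 :: "(int \<times> int \<times> int) set" where
  "T1 = {(u,a,b). u \<in> {1..<p} \<and> a \<in> {0..<p} \<and> b \<in> {0..<p} \<and> (a,b) \<noteq> (0,0) \<and>
      p dvd a^2 - a - u*(b^2 - b) \<and> \<not> (u = 1 \<and> a = b)}"

definition U :: "int \<Rightarrow> int \<Rightarrow> int" where
  "U a b = (SOME u. u \<in> {0..<p} \<and> p dvd (a^2 - a) - u*(b^2 - b))"

lemma U_prop: assumes "b \<in> {2..<p}"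
  shows "U a b \<in> {0..<p} \<and> p dvd (a^2 - a) - U a b*(b^2 - b)"
proof -
  have "\<not> p dvd b^2 - b" using idem_range[of b] assms by auto
  then obtain u where "u \<in> {0..<p} \<and> p dvd (a^2 - a) - u*(b^2 - b)" using solve_ex by blast
  thus ?thesis unfolding U_def by (rule someI)
qed

lemma U_uniq: assumes "b \<in> {2..<p}" "u \<in> {0..<p}" "p dvd (a^2 - a) - u*(b^2 - b)"
  shows "u = U a b"
proof -
  have "\<not> p dvd b^2 - b" using idem_range[of b] assms by auto
  thus ?thesis using solve_uniq U_prop[OF assms(1), of a] assms(2,3) by blast
qed

lemma T1a: "{t \<in> T1. snd (snd t) = 0 \<or> snd (snd t) = 1} =
   {1..<p} \<times> {(1,0),(0,1)} \<union> {2..<p} \<times> {(1,1)}"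
proof (rule set_eqI)
  fix t :: "int \<times> int \<times> int"
  obtain u a b where t: "t = (u,a,b)" by (cases t) auto
  show "t \<in> {t \<in> T1. snd (snd t) = 0 \<or> snd (snd t) = 1} \<longleftrightarrow> t \<in> {1..<p} \<times> {(1,0),(0,1)} \<union> {2..<p} \<times> {(1,1)}"
  proof
    assume "t \<in> {t \<in> T1. snd (snd t) = 0 \<or> snd (snd t) = 1}"
    hence h: "u \<in> {1..<p}" "a \<in> {0..<p}" "(a,b) \<noteq> (0,0)" "p dvd a^2 - a - u*(b^2 - b)"
       "\<not> (u = 1 \<and> a = b)" "b = 0 \<or> b = 1" by (auto simp: T1_def t)
    hence "p dvd a^2 - a" by auto
    hence "a = 0 \<or> a = 1" using idem_range h(2) by auto
    thus "t \<in> {1..<p} \<times> {(1,0),(0,1)} \<union> {2..<p} \<times> {(1,1)}" using h by (auto simp: t)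
  next
    assume "t \<in> {1..<p} \<times> {(1,0),(0,1)} \<union> {2..<p} \<times> {(1,1)}"
    thus "t \<in> {t \<in> T1. snd (snd t) = 0 \<or> snd (snd t) = 1}" using p2 by (auto simp: t T1_def)
  qed
qed

lemma T1b: "{t \<in> T1. \<not> (snd (snd t) = 0 \<or> snd (snd t) = 1)} =
   (\<lambda>(a,b). (U a b, a, b)) ` {(a,b). a \<in> {2..<p} \<and> b \<in> {2..<p} \<and> a \<noteq> b}"
proof (rule set_eqI)
  fix t :: "int \<times> int \<times> int"
  obtain u a b where t: "t = (u,a,b)" by (cases t) auto
  show "t \<in> {t \<in> T1. \<not> (snd (snd t) = 0 \<or> snd (snd t) = 1)} \<longleftrightarrow>
     t \<in> (\<lambda>(a,b). (U a b, a, b)) ` {(a,b). a \<in> {2..<p} \<and> b \<in> {2..<p} \<and> a \<noteq> b}"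
  proof
    assume "t \<in> {t \<in> T1. \<not> (snd (snd t) = 0 \<or> snd (snd t) = 1)}"
    hence h: "u \<in> {1..<p}" "a \<in> {0..<p}" "b \<in> {0..<p}" "p dvd a^2 - a - u*(b^2 - b)"
       "\<not> (u = 1 \<and> a = b)" "b \<noteq> 0" "b \<noteq> 1" by (auto simp: T1_def t)
    have b2: "b \<in> {2..<p}" using h by auto
    have nb: "\<not> p dvd b^2 - b" using idem_range[of b] h by auto
    have uU: "u = U a b" using U_uniq[OF b2, of u a] h by auto
    have a2: "a \<in> {2..<p}"
    proof (rule ccontr)
      assume "a \<notin> {2..<p}"
      hence "a = 0 \<or> a = 1" using h by auto
      hence "p dvd u * (b^2 - b)" using h(4) by (auto simp: power2_eq_square)
      hence "p dvd u" using nb dvd_mult by blast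
      thus False using h(1) dvd_range by auto
    qed
    have ab: "a \<noteq> b"
    proof
      assume "a = b"
      hence "1 = U a b" using U_uniq[OF b2, of 1 a] p2 by auto
      thus False using uU h(5) \<open>a = b\<close> by simp
    qed
    show "t \<in> (\<lambda>(a,b). (U a b, a, b)) ` {(a,b). a \<in> {2..<p} \<and> b \<in> {2..<p} \<and> a \<noteq> b}"
      using a2 b2 ab uU t by auto
  next
    assume "t \<in> (\<lambda>(a,b). (U a b, a, b)) ` {(a,b). a \<in> {2..<p} \<and> b \<in> {2..<p} \<and> a \<noteq> b}"
    hence h: "a \<in> {2..<p}" "b \<in> {2..<p}" "a \<noteq> b" "u = U a b" using t by auto
    have up: "u \<in> {0..<p}" "p dvd (a^2 - a) - u*(b^2 - b)" using U_prop[OF h(2), of a] h(4) by auto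
    have "u \<noteq> 0"
    proof
      assume "u = 0"
      hence "p dvd a^2 - a" using up by simp
      thus False using idem_range[of a] h by auto
    qed
    thus "t \<in> {t \<in> T1. \<not> (snd (snd t) = 0 \<or> snd (snd t) = 1)}"
      using h up by (auto simp: T1_def t)
  qed
qed

lemma card_offdiag: "card {(a,b). a \<in> A \<and> b \<in> A \<and> a \<noteq> b} = card A * card A - card A"
proof (cases "finite A")
  case True
  have e: "{(a,b). a \<in> A \<and> b \<in> A \<and> a \<noteq> b} = A \<times> A - (\<lambda>a. (a,a)) ` A" by auto
  have "card ((\<lambda>a. (a,a)) ` A) = card A" by (rule card_image) (auto simp: inj_on_def)
  moreover have "(\<lambda>a. (a,a)) ` A \<subseteq> A \<times> A" by auto
  ultimately show ?thesis unfolding e using True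
    by (simp add: card_Diff_subset card_cartesian_product finite_subset)
next
  case False
  hence "infinite (A \<times> A - (\<lambda>a. (a,a)) ` A)"
  proof -
    obtain a where "a \<in> A" using False by (metis ex_in_conv finite.emptyI)
    have "inj_on (\<lambda>b. (a,b)) (A - {a})" by (auto simp: inj_on_def)
    moreover have "infinite (A - {a})" using False by simp
    ultimately have "infinite ((\<lambda>b. (a,b)) ` (A - {a}))" using finite_imageD by blast
    moreover have "(\<lambda>b. (a,b)) ` (A - {a}) \<subseteq> A \<times> A - (\<lambda>a. (a,a)) ` A" using \<open>a \<in> A\<close> by auto
    ultimately show ?thesis using finite_subset by blast
  qed
  moreover have "{(a,b). a \<in> A \<and> b \<in> A \<and> a \<noteq> b} = A \<times> A - (\<lambda>a. (a,a)) ` A" by auto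
  ultimately show ?thesis using False by simp
qed

lemma card_T1: "int (card T1) = p^2 - 2*p + 2"
proof -
  have fin: "finite T1"
    by (rule finite_subset[of _ "{1..<p} \<times> {0..<p} \<times> {0..<p}"]) (auto simp: T1_def)
  have split: "T1 = {t \<in> T1. snd (snd t) = 0 \<or> snd (snd t) = 1} \<union> {t \<in> T1. \<not> (snd (snd t) = 0 \<or> snd (snd t) = 1)}"
    by auto
  have "card T1 = card {t \<in> T1. snd (snd t) = 0 \<or> snd (snd t) = 1} + card {t \<in> T1. \<not> (snd (snd t) = 0 \<or> snd (snd t) = 1)}"
    by (subst split, rule card_Un_disjoint) (use fin in auto)
  also have "card {t \<in> T1. snd (snd t) = 0 \<or> snd (snd t) = 1} = card ({1..<p} \<times> {(1::int,0::int),(0,1)}) + card ({2..<p} \<times> {(1::int,1::int)})"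
    unfolding T1a by (rule card_Un_disjoint) auto
  also have "card {t \<in> T1. \<not> (snd (snd t) = 0 \<or> snd (snd t) = 1)} = card {(a,b). a \<in> {2..<p} \<and> b \<in> {2..<p} \<and> a \<noteq> b}"
    unfolding T1b by (rule card_image) (auto simp: inj_on_def)
  also have "card {(a,b). a \<in> {2..<p} \<and> b \<in> {2..<p} \<and> a \<noteq> b} = nat (p - 2) * nat (p - 2) - nat (p - 2)"
    by (subst card_offdiag) simp
  finally have "card T1 = nat (p - 1) * 2 + nat (p - 2) + (nat (p - 2) * nat (p - 2) - nat (p - 2))"
    by (simp add: card_cartesian_product)
  moreover have "nat (p - 2) \<le> nat (p - 2) * nat (p - 2) \<or> p = 2" using p2
    by (metis le_square)
  ultimately show ?thesis using p2 by (auto simp: of_nat_diff power2_eq_square algebra_simps)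
qed

end

lemma dvd_from: "(p::int) dvd a - b \<Longrightarrow> p dvd b \<Longrightarrow> p dvd a" by (metis diff_add_cancel dvd_add)

context primeint begin

definition T2 :: "(int \<times> int \<times> int \<times> int \<times> int) set" where
  "T2 = {(u,a1,b1,a2,b2). u \<in> {1..<p} \<and> a1 \<in> {0..<p} \<and> b1 \<in> {0..<p} \<and> a2 \<in> {0..<p} \<and> b2 \<in> {0..<p} \<and>
      (a1,b1) \<noteq> (0,0) \<and> (a2,b2) \<noteq> (0,0) \<and>
      p dvd a1^2 - a1 - u*(b1^2 - b1) \<and> p dvd a2^2 - a2 - u*(b2^2 - b2) \<and>
      p dvd a1*a2 - u*b1*b2 \<and> \<not> (u = 1 \<and> a1 = b1 \<and> a2 = b2)}"

lemma nz_range: "a \<in> {0..<p} \<Longrightarrow> b \<in> {0..<p} \<Longrightarrow> (a,b) \<noteq> (0,0) \<longleftrightarrow> \<not> (p dvd a \<and> p dvd b)"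
  using dvd_range by auto

lemma u_ndvd: "u \<in> {1..<p} \<Longrightarrow> \<not> p dvd u" using dvd_range by auto

lemma T2_neq: assumes "(u,a1,b1,a2,b2) \<in> T2" shows "a1 \<noteq> b1"
proof
  assume e: "a1 = b1"
  have h: "u \<in> {1..<p}" "a1 \<in> {0..<p}" "b1 \<in> {0..<p}" "a2 \<in> {0..<p}" "b2 \<in> {0..<p}"
      "(a1,b1) \<noteq> (0,0)" "(a2,b2) \<noteq> (0,0)"
      "p dvd a1^2 - a1 - u*(b1^2 - b1)" "p dvd a2^2 - a2 - u*(b2^2 - b2)"
      "p dvd a1*a2 - u*b1*b2" "\<not> (u = 1 \<and> a1 = b1 \<and> a2 = b2)" using assms by (auto simp: T2_def)
  have nz1: "\<not> (p dvd a1 \<and> p dvd b1)" and nz2: "\<not> (p dvd a2 \<and> p dvd b2)" using h nz_range by auto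
  have pu: "\<not> p dvd u" using h u_ndvd by auto
  show False
  proof (cases "u = 1")
    case True
    have iso: "p dvd a1^2 - u*b1^2" using True e by simp
    from L3[OF nz1 iso h(8) pu] have "p dvd u - 1" "p dvd a1 - b1" by auto
    have "\<not> p dvd a1" using nz1 e by auto
    have "p dvd a2 - b2" by (rule L4[OF \<open>p dvd u - 1\<close> \<open>p dvd a1 - b1\<close> \<open>\<not> p dvd a1\<close> h(10)])
    hence "a2 = b2" using range_eq h by auto
    thus False using h(11) True e by simp
  next
    case False
    have "\<not> p dvd u - 1" using False h(1) dvd_range[of "u-1"] by auto
    moreover have "p dvd (u - 1) * (-(a1^2 - a1))" using h(8) e by (simp add: algebra_simps)
    ultimately have "p dvd -(a1^2 - a1)" using dvd_mult by blast
    hence "p dvd a1^2 - a1" by (simp only: dvd_minus_iff)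
    hence "a1 = 1" using idem_range h(2,6) e by auto
    hence o: "p dvd a2 - u*b2" using h(10) e by simp
    have "p dvd (u*(u-1))*(b2*b2)"
      by (rule dvd_lin2[OF h(9) o, of _ 1 "-(a2 + u*b2 - 1)"]) (simp add: algebra_simps power2_eq_square)
    hence "p dvd b2" using pu \<open>\<not> p dvd u - 1\<close> dvd_mult by blast
    hence "p dvd u*b2" by simp
    hence "p dvd a2" using dvd_from[OF o] by blast
    thus False using nz2 \<open>p dvd b2\<close> by blast
  qed
qed

lemma T2_aniso: assumes "(u,a1,b1,a2,b2) \<in> T2" shows "\<not> p dvd a2^2 - u*b2^2"
proof
  assume iso: "p dvd a2^2 - u*b2^2"
  have h: "u \<in> {1..<p}" "a1 \<in> {0..<p}" "b1 \<in> {0..<p}" "a2 \<in> {0..<p}" "b2 \<in> {0..<p}"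
      "(a1,b1) \<noteq> (0,0)" "(a2,b2) \<noteq> (0,0)"
      "p dvd a1^2 - a1 - u*(b1^2 - b1)" "p dvd a2^2 - a2 - u*(b2^2 - b2)"
      "p dvd a1*a2 - u*b1*b2" "\<not> (u = 1 \<and> a1 = b1 \<and> a2 = b2)" using assms by (auto simp: T2_def)
  have nz2: "\<not> (p dvd a2 \<and> p dvd b2)" using h nz_range by auto
  have pu: "\<not> p dvd u" using h u_ndvd by auto
  from L3[OF nz2 iso h(9) pu] have a: "p dvd u - 1" "p dvd a2 - b2" by auto
  have "\<not> p dvd a2" using nz2 a(2) by (metis dvd_diff_commute dvd_add_right_iff diff_add_cancel)
  moreover have "p dvd a2*a1 - u*b2*b1" using h(10) by (simp add: ac_simps)
  ultimately have "p dvd a1 - b1" using L4 a by blast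
  hence "a1 = b1" using range_eq h by auto
  thus False using T2_neq assms by blast
qed

lemma uniq_half:
  assumes par: "p dvd a2*d2 - c2*b2" and sa: "p dvd a2^2 - a2 - u*(b2^2 - b2)"
    and sc: "p dvd c2^2 - c2 - u*(d2^2 - d2)" and an: "\<not> p dvd a2^2 - u*b2^2"
  shows "p dvd (c2^2 - u*d2^2) - (a2*c2 - u*b2*d2)"
proof -
  let ?N = "a2^2 - u*b2^2" and ?N' = "c2^2 - u*d2^2" and ?B = "a2*c2 - u*b2*d2"
  have e1: "p dvd c2*?N - a2*?B"
    by (rule dvd_lin2[OF par par, of _ "u*b2" 0]) (simp add: algebra_simps power2_eq_square)
  have e2: "p dvd d2*?N - b2*?B"
    by (rule dvd_lin2[OF par par, of _ a2 0]) (simp add: algebra_simps power2_eq_square)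
  have e3: "p dvd (c2 - u*d2)*?N - (a2 - u*b2)*?B"
    by (rule dvd_lin2[OF e1 e2, of _ 1 "-u"]) (simp add: algebra_simps)
  have "p dvd ((?N' - (c2 - u*d2)) * ?N + ((c2 - u*d2)*?N - (a2 - u*b2)*?B)) + ((a2 - u*b2) - ?N)*?B"
    using sa sc e3 by (intro dvd_add dvd_mult2) (auto simp: algebra_simps dvd_diff_commute)
  hence "p dvd ?N * (?N' - ?B)" by (simp add: algebra_simps)
  thus ?thesis using an dvd_mult by blast
qed

lemma T2_uniq: assumes "(u,a1,b1,a2,b2) \<in> T2" "(u,a1,b1,c2,d2) \<in> T2" shows "a2 = c2 \<and> b2 = d2"
proof -
  have h: "u \<in> {1..<p}" "a1 \<in> {0..<p}" "b1 \<in> {0..<p}" "a2 \<in> {0..<p}" "b2 \<in> {0..<p}"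
      "(a1,b1) \<noteq> (0,0)" "p dvd a2^2 - a2 - u*(b2^2 - b2)"
      "p dvd a1*a2 - u*b1*b2" using assms(1) by (auto simp: T2_def)
  have h': "c2 \<in> {0..<p}" "d2 \<in> {0..<p}" "p dvd c2^2 - c2 - u*(d2^2 - d2)"
      "p dvd a1*c2 - u*b1*d2" using assms(2) by (auto simp: T2_def)
  have nz1: "\<not> (p dvd a1 \<and> p dvd b1)" using h nz_range by auto
  have pu: "\<not> p dvd u" using h u_ndvd by auto
  have o1: "p dvd a2*a1 - u*b2*b1" using h(8) by (simp add: ac_simps)
  have o2: "p dvd c2*a1 - u*d2*b1" using h'(4) by (simp add: ac_simps)
  have par: "p dvd a2*d2 - c2*b2" by (rule L1[OF pu nz1 o1 o2])
  have par': "p dvd c2*b2 - a2*d2" using par by (simp add: dvd_diff_commute)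
  have an: "\<not> p dvd a2^2 - u*b2^2" using T2_aniso assms(1) by blast
  have an': "\<not> p dvd c2^2 - u*d2^2" using T2_aniso assms(2) by blast
  have x1: "p dvd (c2^2 - u*d2^2) - (a2*c2 - u*b2*d2)" by (rule uniq_half[OF par h(7) h'(3) an])
  have x2: "p dvd (a2^2 - u*b2^2) - (c2*a2 - u*d2*b2)" by (rule uniq_half[OF par' h'(3) h(7) an'])
  have x2': "p dvd (a2^2 - u*b2^2) - (a2*c2 - u*b2*d2)" using x2 by (simp add: ac_simps)
  let ?N = "a2^2 - u*b2^2" and ?B = "a2*c2 - u*b2*d2"
  have e1: "p dvd c2*?N - a2*?B"
    by (rule dvd_lin2[OF par par, of _ "u*b2" 0]) (simp add: algebra_simps power2_eq_square)
  have e2: "p dvd d2*?N - b2*?B"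
    by (rule dvd_lin2[OF par par, of _ a2 0]) (simp add: algebra_simps power2_eq_square)
  have "p dvd ?N * (c2 - a2)"
    by (rule dvd_lin2[OF e1 x2', of _ 1 "-a2"]) (simp add: algebra_simps)
  hence "p dvd c2 - a2" using an dvd_mult by blast
  hence "c2 = a2" using range_eq h h' by auto
  moreover have "p dvd ?N * (d2 - b2)"
    by (rule dvd_lin2[OF e2 x2', of _ 1 "-b2"]) (simp add: algebra_simps)
  hence "p dvd d2 - b2" using an dvd_mult by blast
  hence "d2 = b2" using range_eq h h' by auto
  ultimately show ?thesis by simp
qed

lemma T2_ex: assumes "(u,a,b) \<in> T1" "a \<noteq> b" shows "\<exists>a2 b2. (u,a,b,a2,b2) \<in> T2"
proof -
  have h: "u \<in> {1..<p}" "a \<in> {0..<p}" "b \<in> {0..<p}" "(a,b) \<noteq> (0,0)"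
      "p dvd a^2 - a - u*(b^2 - b)" using assms by (auto simp: T1_def)
  have nz1: "\<not> (p dvd a \<and> p dvd b)" using h nz_range by auto
  have pu: "\<not> p dvd u" using h u_ndvd by auto
  have an: "\<not> p dvd a^2 - u*b^2"
  proof
    assume "p dvd a^2 - u*b^2"
    from L3[OF nz1 this h(5) pu] have "p dvd a - b" by auto
    thus False using range_eq h assms(2) by auto
  qed
  let ?Nw = "u^2*b^2 - u*a^2" and ?Lw = "u*b - u*a"
  have "?Nw = (-u) * (a^2 - u*b^2)" by (simp add: algebra_simps power2_eq_square)
  hence nNw: "\<not> p dvd ?Nw" using an pu dvd_mult by (metis dvd_minus_iff)
  obtain t where t: "t \<in> {0..<p}" "p dvd ?Lw - t*?Nw" using solve_ex[OF nNw] by blast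
  define a2 where "a2 = (t*u*b) mod p"
  define b2 where "b2 = (t*a) mod p"
  have ca: "[a2 = t*u*b] (mod p)" unfolding a2_def by (simp add: cong_def)
  have cb: "[b2 = t*a] (mod p)" unfolding b2_def by (simp add: cong_def)
  have r: "a2 \<in> {0..<p}" "b2 \<in> {0..<p}" using p2 by (auto simp: a2_def b2_def)
  have "[a2^2 - a2 - u*(b2^2 - b2) = (t*u*b)^2 - t*u*b - u*((t*a)^2 - t*a)] (mod p)"
    by (intro cong_diff cong_mult cong_pow cong_refl ca cb)
  moreover have "(t*u*b)^2 - t*u*b - u*((t*a)^2 - t*a) = (-t) * (?Lw - t*?Nw)"
    by (simp add: algebra_simps power2_eq_square)
  ultimately have s2: "p dvd a2^2 - a2 - u*(b2^2 - b2)" using t(2)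
    by (metis cong_0_iff cong_dvd_iff dvd_mult)
  have "[a*a2 - u*b*b2 = a*(t*u*b) - u*b*(t*a)] (mod p)"
    by (intro cong_diff cong_mult cong_refl ca cb)
  moreover have "a*(t*u*b) - u*b*(t*a) = 0" by (simp add: algebra_simps)
  ultimately have o: "p dvd a*a2 - u*b*b2" by (simp add: cong_0_iff)
  have nz2: "(a2,b2) \<noteq> (0,0)"
  proof
    assume "(a2,b2) = (0,0)"
    hence "[0 = t*u*b] (mod p)" "[0 = t*a] (mod p)" using ca cb by auto
    hence z: "p dvd t*u*b" "p dvd t*a" by (metis cong_0_iff cong_sym)+
    have "\<not> p dvd t"
    proof
      assume "p dvd t"
      hence "p dvd ?Lw" using t(2) by (metis dvd_mult2 dvd_diff_commute dvd_add_right_iff diff_add_cancel)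
      hence "p dvd u * (b - a)" by (simp add: algebra_simps)
      hence "p dvd b - a" using pu dvd_mult by blast
      thus False using range_eq h assms(2) by auto
    qed
    hence "p dvd b" "p dvd a" using z pu dvd_mult by (auto simp: mult.assoc)
    thus False using nz1 by blast
  qed
  show ?thesis
    using h r s2 o nz2 assms(2) unfolding T2_def by blast
qed

lemma T1_diag: "{t \<in> T1. fst (snd t) = snd (snd t)} = {2..<p} \<times> {(1,1)}"
proof (rule set_eqI)
  fix t :: "int \<times> int \<times> int"
  obtain u a b where t: "t = (u,a,b)" by (cases t) auto
  show "t \<in> {t \<in> T1. fst (snd t) = snd (snd t)} \<longleftrightarrow> t \<in> {2..<p} \<times> {(1,1)}"
  proof
    assume "t \<in> {t \<in> T1. fst (snd t) = snd (snd t)}"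
    hence h: "u \<in> {1..<p}" "a \<in> {0..<p}" "(a,b) \<noteq> (0,0)" "p dvd a^2 - a - u*(b^2 - b)"
       "\<not> (u = 1 \<and> a = b)" "a = b" by (auto simp: T1_def t)
    have u1: "u \<noteq> 1" using h by auto
    have "\<not> p dvd u - 1" using u1 h(1) dvd_range[of "u-1"] by auto
    moreover have "p dvd (u - 1) * (-(a^2 - a))" using h(4,6) by (simp add: algebra_simps)
    ultimately have "p dvd -(a^2 - a)" using dvd_mult by blast
    hence "p dvd a^2 - a" by (simp only: dvd_minus_iff)
    hence "a = 1" using idem_range h by auto
    thus "t \<in> {2..<p} \<times> {(1,1)}" using h u1 t by auto
  next
    assume "t \<in> {2..<p} \<times> {(1,1)}"
    thus "t \<in> {t \<in> T1. fst (snd t) = snd (snd t)}" using p2 by (auto simp: T1_def t)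
  qed
qed

lemma card_T2: "int (card T2) = p^2 - 3*p + 4"
proof -
  let ?pr = "\<lambda>(u::int,a1::int,b1::int,a2::int,b2::int). (u,a1,b1)"
  have inj: "inj_on ?pr T2"
  proof (rule inj_onI)
    fix x y assume "x \<in> T2" "y \<in> T2" "?pr x = ?pr y"
    thus "x = y" using T2_uniq by (cases x, cases y) fastforce
  qed
  have img: "?pr ` T2 = {t \<in> T1. fst (snd t) \<noteq> snd (snd t)}"
  proof (rule set_eqI, rule iffI)
    fix t assume "t \<in> ?pr ` T2"
    then obtain u a1 b1 a2 b2 where x: "(u,a1,b1,a2,b2) \<in> T2" "t = (u,a1,b1)" by auto
    have "a1 \<noteq> b1" using T2_neq x(1) by blast
    thus "t \<in> {t \<in> T1. fst (snd t) \<noteq> snd (snd t)}" using x by (auto simp: T1_def T2_def)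
  next
    fix t assume a: "t \<in> {t \<in> T1. fst (snd t) \<noteq> snd (snd t)}"
    obtain u a b where t: "t = (u,a,b)" by (cases t) auto
    have "(u,a,b) \<in> T1" "a \<noteq> b" using a t by auto
    then obtain a2 b2 where "(u,a,b,a2,b2) \<in> T2" using T2_ex by blast
    thus "t \<in> ?pr ` T2" using t by force
  qed
  have fin: "finite T1"
    by (rule finite_subset[of _ "{1..<p} \<times> {0..<p} \<times> {0..<p}"]) (auto simp: T1_def)
  have "card T2 = card {t \<in> T1. fst (snd t) \<noteq> snd (snd t)}"
    using card_image[OF inj] img by simp
  also have "{t \<in> T1. fst (snd t) \<noteq> snd (snd t)} = T1 - {t \<in> T1. fst (snd t) = snd (snd t)}" by auto
  also have "card \<dots> = card T1 - card {t \<in> T1. fst (snd t) = snd (snd t)}"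
    by (rule card_Diff_subset) (use fin in auto)
  also have "card {t \<in> T1. fst (snd t) = snd (snd t)} = nat (p - 2)"
    unfolding T1_diag by (simp add: card_cartesian_product)
  finally have c: "card T2 = card T1 - nat (p - 2)" .
  have "nat (p - 2) \<le> card T1"
  proof -
    have "{t \<in> T1. fst (snd t) = snd (snd t)} \<subseteq> T1" by auto
    hence "card {t \<in> T1. fst (snd t) = snd (snd t)} \<le> card T1" using fin by (rule card_mono[rotated])
    thus ?thesis unfolding T1_diag by (simp add: card_cartesian_product)
  qed
  thus ?thesis using c card_T1 p2 by (simp add: of_nat_diff)
qed

end

context primeint begin

definition solQ :: "nat set \<Rightarrow> (nat \<Rightarrow> int) \<Rightarrow> int \<Rightarrow> (nat \<Rightarrow> int) \<Rightarrow> bool" where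
  "solQ Q x u y \<longleftrightarrow> (\<forall>i\<in>Q. \<forall>j\<in>Q. i \<noteq> j \<longrightarrow> p dvd x i * x j - u * y i * y j) \<and>
     (\<forall>i\<in>Q. p dvd x i ^ 2 - x i - u * (y i ^ 2 - y i))"

definition Dset :: "nat set \<Rightarrow> ((nat \<Rightarrow> int) \<times> int \<times> (nat \<Rightarrow> int)) set" where
  "Dset Q = {(x,u,y). x \<in> Fz Q {0..<p} \<and> u \<in> {0..<p} \<and> y \<in> Fz Q {0..<p} \<and> solQ Q x u y}"

definition D2 :: "nat set \<Rightarrow> ((nat \<Rightarrow> int) \<times> int \<times> (nat \<Rightarrow> int)) set" where
  "D2 Q = {(x,u,y). (x,u,y) \<in> Dset Q \<and> u \<noteq> 0 \<and> \<not> (u = 1 \<and> x = y)}"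

definition supp :: "(nat \<Rightarrow> int) \<Rightarrow> (nat \<Rightarrow> int) \<Rightarrow> nat set" where
  "supp x y = {i. x i \<noteq> 0 \<or> y i \<noteq> 0}"

lemma supp_no3:
  assumes t: "(x,u,y) \<in> D2 Q" and i: "i \<in> supp x y" and j: "j \<in> supp x y" and l: "l \<in> supp x y"
    and d: "i \<noteq> j" "j \<noteq> l" "i \<noteq> l"
  shows False
proof -
  have h: "x \<in> Fz Q {0..<p}" "u \<in> {0..<p}" "y \<in> Fz Q {0..<p}" "solQ Q x u y" "u \<noteq> 0" "\<not> (u = 1 \<and> x = y)"
    using t by (auto simp: D2_def Dset_def)
  have inQ: "\<And>m. m \<in> supp x y \<Longrightarrow> m \<in> Q" using h(1,3) by (auto simp: supp_def Fz_def)
  have rng: "\<And>m. m \<in> Q \<Longrightarrow> x m \<in> {0..<p} \<and> y m \<in> {0..<p}" using h(1,3) by (auto simp: Fz_def)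
  have nz: "\<And>m. m \<in> supp x y \<Longrightarrow> \<not> (p dvd x m \<and> p dvd y m)"
  proof -
    fix m assume "m \<in> supp x y"
    hence "(x m, y m) \<noteq> (0,0)" by (auto simp: supp_def)
    thus "\<not> (p dvd x m \<and> p dvd y m)" using nz_range rng inQ \<open>m \<in> supp x y\<close> by blast
  qed
  have orth: "\<And>a b. a \<in> Q \<Longrightarrow> b \<in> Q \<Longrightarrow> a \<noteq> b \<Longrightarrow> p dvd x a * x b - u * y a * y b"
    using h(4) by (auto simp: solQ_def)
  have inS: "\<And>a. a \<in> Q \<Longrightarrow> p dvd x a ^ 2 - x a - u * (y a ^ 2 - y a)"
    using h(4) by (auto simp: solQ_def)
  have pu: "\<not> p dvd u" using h(2,5) dvd_range by auto
  have par: "p dvd x i * y j - x j * y i"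
    by (rule L1[OF pu nz[OF l] orth orth]) (use inQ i j l d in auto)
  have iso: "p dvd x i ^ 2 - u * y i ^ 2"
    by (rule L2[OF nz[OF j] orth par]) (use inQ i j d in auto)
  from L3[OF nz[OF i] iso inS[OF inQ[OF i]] pu] have a: "p dvd u - 1" "p dvd x i - y i" by auto
  have u1: "u = 1" using range_eq[of u 1] a(1) h(2,5) p2 by auto
  have xi: "\<not> p dvd x i"
  proof
    assume xd: "p dvd x i"
    have "y i = x i - (x i - y i)" by simp
    hence "p dvd y i" using xd a(2) by (metis dvd_diff)
    thus False using nz[OF i] xd by blast
  qed
  have "x = y"
  proof
    fix m show "x m = y m"
    proof (cases "m \<in> Q")
      case True
      have "p dvd x m - y m"
      proof (cases "m = i")
        case True thus ?thesis using a by simp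
      next
        case False
        show ?thesis by (rule L4[OF a xi orth]) (use True False inQ[OF i] in auto)
      qed
      thus ?thesis using range_eq rng True by blast
    next
      case False thus ?thesis using h(1,3) by (auto simp: Fz_def)
    qed
  qed
  thus False using h(6) u1 by simp
qed

lemma no3_cases:
  assumes "\<And>i j l. i \<in> S \<Longrightarrow> j \<in> S \<Longrightarrow> l \<in> S \<Longrightarrow> i \<noteq> j \<Longrightarrow> j \<noteq> l \<Longrightarrow> i \<noteq> l \<Longrightarrow> False"
  shows "S = {} \<or> (\<exists>j. S = {j}) \<or> (\<exists>j l. j < (l::nat) \<and> S = {j,l})"
proof (cases "S = {}")
  case False
  then obtain j where j: "j \<in> S" by blast
  show ?thesis
  proof (cases "S = {j}")
    case False
    then obtain l where l: "l \<in> S" "l \<noteq> j" using j by blast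
    have "S = {j,l}" using assms j l by blast
    show ?thesis
    proof (cases "j < l")
      case True thus ?thesis using \<open>S = {j,l}\<close> by blast
    next
      case False
      hence "l < j" using l(2) by simp
      moreover have "S = {l,j}" using \<open>S = {j,l}\<close> by blast
      ultimately show ?thesis by blast
    qed
  qed auto
qed simp

end

context primeint begin

lemma solQ_delta: assumes "j \<in> Q"
  shows "solQ Q (delta j a) u (delta j b) \<longleftrightarrow> p dvd a^2 - a - u*(b^2 - b)"
  using assms by (auto simp: solQ_def delta_def)

definition delta2 :: "nat \<Rightarrow> nat \<Rightarrow> int \<Rightarrow> int \<Rightarrow> nat \<Rightarrow> int" where
  "delta2 j l a c = (\<lambda>i. if i = j then a else if i = l then c else 0)"

lemma solQ_delta2: assumes "j \<in> Q" "l \<in> Q" "j \<noteq> l"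
  shows "solQ Q (delta2 j l a1 a2) u (delta2 j l b1 b2) \<longleftrightarrow>
    p dvd a1^2 - a1 - u*(b1^2 - b1) \<and> p dvd a2^2 - a2 - u*(b2^2 - b2) \<and> p dvd a1*a2 - u*b1*b2"
proof
  assume s: "solQ Q (delta2 j l a1 a2) u (delta2 j l b1 b2)"
  have "p dvd delta2 j l a1 a2 j * delta2 j l a1 a2 l - u * delta2 j l b1 b2 j * delta2 j l b1 b2 l"
    using s assms unfolding solQ_def by blast
  moreover have "p dvd delta2 j l a1 a2 j ^2 - delta2 j l a1 a2 j - u * (delta2 j l b1 b2 j^2 - delta2 j l b1 b2 j)"
    using s assms unfolding solQ_def by blast
  moreover have "p dvd delta2 j l a1 a2 l ^2 - delta2 j l a1 a2 l - u * (delta2 j l b1 b2 l^2 - delta2 j l b1 b2 l)"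
    using s assms unfolding solQ_def by blast
  ultimately show "p dvd a1^2 - a1 - u*(b1^2 - b1) \<and> p dvd a2^2 - a2 - u*(b2^2 - b2) \<and> p dvd a1*a2 - u*b1*b2"
    using assms by (simp add: delta2_def)
next
  assume h: "p dvd a1^2 - a1 - u*(b1^2 - b1) \<and> p dvd a2^2 - a2 - u*(b2^2 - b2) \<and> p dvd a1*a2 - u*b1*b2"
  have h': "p dvd a2*a1 - u*b2*b1" using h by (simp add: ac_simps)
  show "solQ Q (delta2 j l a1 a2) u (delta2 j l b1 b2)"
    unfolding solQ_def
  proof (intro conjI ballI impI)
    fix i i' assume "i \<in> Q" "i' \<in> Q" "i \<noteq> i'"
    thus "p dvd delta2 j l a1 a2 i * delta2 j l a1 a2 i' - u * delta2 j l b1 b2 i * delta2 j l b1 b2 i'"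
      using h h' assms(3) by (auto simp: delta2_def)
  next
    fix i assume "i \<in> Q"
    show "p dvd delta2 j l a1 a2 i ^2 - delta2 j l a1 a2 i - u * (delta2 j l b1 b2 i^2 - delta2 j l b1 b2 i)"
      using h by (auto simp: delta2_def)
  qed
qed

definition E1 :: "nat set \<Rightarrow> nat \<Rightarrow> ((nat \<Rightarrow> int) \<times> int \<times> (nat \<Rightarrow> int)) set" where
  "E1 Q j = {(x,u,y). (x,u,y) \<in> D2 Q \<and> supp x y = {j}}"

definition E2 :: "nat set \<Rightarrow> nat \<Rightarrow> nat \<Rightarrow> ((nat \<Rightarrow> int) \<times> int \<times> (nat \<Rightarrow> int)) set" where
  "E2 Q j l = {(x,u,y). (x,u,y) \<in> D2 Q \<and> supp x y = {j,l}}"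

lemma D2_iff: "(x,u,y) \<in> D2 Q \<longleftrightarrow> x \<in> Fz Q {0..<p} \<and> u \<in> {0..<p} \<and> y \<in> Fz Q {0..<p} \<and> solQ Q x u y \<and> u \<noteq> 0 \<and> \<not> (u = 1 \<and> x = y)"
  by (auto simp: D2_def Dset_def)

lemma card_E1: assumes "j \<in> Q" shows "card (E1 Q j) = card T1"
proof -
  have "bij_betw (\<lambda>(x,u,y). (u, x j, y j)) (E1 Q j) T1"
  proof (rule bij_betw_byWitness[where f'="\<lambda>(u,a,b). (delta j a, u, delta j b)"])
    show "\<forall>t\<in>E1 Q j. (\<lambda>(u,a,b). (delta j a, u, delta j b)) ((\<lambda>(x,u,y). (u, x j, y j)) t) = t"
    proof
      fix t assume "t \<in> E1 Q j"
      then obtain x u y where t: "t = (x,u,y)" "supp x y = {j}" by (auto simp: E1_def)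
      have "\<And>i. i \<noteq> j \<Longrightarrow> x i = 0 \<and> y i = 0" using t(2) by (auto simp: supp_def)
      hence "delta j (x j) = x" "delta j (y j) = y" by (auto simp: delta_def fun_eq_iff)
      thus "(\<lambda>(u,a,b). (delta j a, u, delta j b)) ((\<lambda>(x,u,y). (u, x j, y j)) t) = t" using t by simp
    qed
    show "\<forall>s\<in>T1. (\<lambda>(x,u,y). (u, x j, y j)) ((\<lambda>(u,a,b). (delta j a, u, delta j b)) s) = s"
      by (auto simp: delta_def)
    show "(\<lambda>(x,u,y). (u, x j, y j)) ` E1 Q j \<subseteq> T1"
    proof
      fix s assume "s \<in> (\<lambda>(x,u,y). (u, x j, y j)) ` E1 Q j"
      then obtain x u y where s: "s = (u, x j, y j)" "(x,u,y) \<in> D2 Q" "supp x y = {j}"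
        by (auto simp: E1_def)
      have h: "x \<in> Fz Q {0..<p}" "u \<in> {0..<p}" "y \<in> Fz Q {0..<p}" "solQ Q x u y" "u \<noteq> 0"
        "\<not> (u = 1 \<and> x = y)" using s(2) D2_iff by auto
      have z: "\<And>i. i \<noteq> j \<Longrightarrow> x i = 0 \<and> y i = 0" using s(3) by (auto simp: supp_def)
      have "(x j, y j) \<noteq> (0,0)" using s(3) by (auto simp: supp_def)
      moreover have "\<not> (u = 1 \<and> x j = y j)"
      proof
        assume "u = 1 \<and> x j = y j"
        moreover have "x = y" if "x j = y j"
        proof
          fix i show "x i = y i" using z[of i] that by (cases "i = j") auto
        qed
        ultimately show False using h(6) by blast
      qed
      moreover have "p dvd x j ^2 - x j - u*(y j^2 - y j)" using h(4) assms by (auto simp: solQ_def)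
      ultimately show "s \<in> T1" using h assms s(1) by (auto simp: T1_def Fz_def)
    qed
    show "(\<lambda>(u,a,b). (delta j a, u, delta j b)) ` T1 \<subseteq> E1 Q j"
    proof
      fix t assume "t \<in> (\<lambda>(u,a,b). (delta j a, u, delta j b)) ` T1"
      then obtain u a b where t: "t = (delta j a, u, delta j b)" "(u,a,b) \<in> T1" by auto
      have h: "u \<in> {1..<p}" "a \<in> {0..<p}" "b \<in> {0..<p}" "(a,b) \<noteq> (0,0)"
        "p dvd a^2 - a - u*(b^2 - b)" "\<not> (u = 1 \<and> a = b)" using t(2) by (auto simp: T1_def)
      have "delta j a \<in> Fz Q {0..<p}" "delta j b \<in> Fz Q {0..<p}"
        using h assms p2 by (auto simp: Fz_def delta_def)
      moreover have "solQ Q (delta j a) u (delta j b)" using solQ_delta assms h by blast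
      moreover have "\<not> (u = 1 \<and> delta j a = delta j b)"
      proof
        assume "u = 1 \<and> delta j a = delta j b"
        hence "delta j a j = delta j b j" by simp
        thus False using h(6) \<open>u = 1 \<and> delta j a = delta j b\<close> by (simp add: delta_def)
      qed
      moreover have "supp (delta j a) (delta j b) = {j}" using h(4) by (auto simp: supp_def delta_def)
      ultimately show "t \<in> E1 Q j" using h t(1) by (auto simp: E1_def D2_iff)
    qed
  qed
  thus ?thesis by (rule bij_betw_same_card)
qed

lemma card_E2: assumes "j \<in> Q" "l \<in> Q" "j < l" shows "card (E2 Q j l) = card T2"
proof -
  have jl: "j \<noteq> l" "l \<noteq> j" using assms(3) by auto
  have "bij_betw (\<lambda>(x,u,y). (u, x j, y j, x l, y l)) (E2 Q j l) T2"
  proof (rule bij_betw_byWitness[where f'="\<lambda>(u,a1,b1,a2,b2). (delta2 j l a1 a2, u, delta2 j l b1 b2)"])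
    show "\<forall>t\<in>E2 Q j l. (\<lambda>(u,a1,b1,a2,b2). (delta2 j l a1 a2, u, delta2 j l b1 b2)) ((\<lambda>(x,u,y). (u, x j, y j, x l, y l)) t) = t"
    proof
      fix t assume "t \<in> E2 Q j l"
      then obtain x u y where t: "t = (x,u,y)" "supp x y = {j,l}" by (auto simp: E2_def)
      have "\<And>i. i \<noteq> j \<Longrightarrow> i \<noteq> l \<Longrightarrow> x i = 0 \<and> y i = 0" using t(2) by (auto simp: supp_def)
      hence "delta2 j l (x j) (x l) = x" "delta2 j l (y j) (y l) = y" by (auto simp: delta2_def fun_eq_iff)
      thus "(\<lambda>(u,a1,b1,a2,b2). (delta2 j l a1 a2, u, delta2 j l b1 b2)) ((\<lambda>(x,u,y). (u, x j, y j, x l, y l)) t) = t"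
        using t by simp
    qed
    show "\<forall>s\<in>T2. (\<lambda>(x,u,y). (u, x j, y j, x l, y l)) ((\<lambda>(u,a1,b1,a2,b2). (delta2 j l a1 a2, u, delta2 j l b1 b2)) s) = s"
      using jl by (auto simp: delta2_def)
    show "(\<lambda>(x,u,y). (u, x j, y j, x l, y l)) ` E2 Q j l \<subseteq> T2"
    proof
      fix s assume "s \<in> (\<lambda>(x,u,y). (u, x j, y j, x l, y l)) ` E2 Q j l"
      then obtain x u y where s: "s = (u, x j, y j, x l, y l)" "(x,u,y) \<in> D2 Q" "supp x y = {j,l}"
        by (auto simp: E2_def)
      have h: "x \<in> Fz Q {0..<p}" "u \<in> {0..<p}" "y \<in> Fz Q {0..<p}" "solQ Q x u y" "u \<noteq> 0"
        "\<not> (u = 1 \<and> x = y)" using s(2) D2_iff by auto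
      have z: "\<And>i. i \<noteq> j \<Longrightarrow> i \<noteq> l \<Longrightarrow> x i = 0 \<and> y i = 0" using s(3) by (auto simp: supp_def)
      have "(x j, y j) \<noteq> (0,0)" "(x l, y l) \<noteq> (0,0)" using s(3) by (auto simp: supp_def)
      moreover have "\<not> (u = 1 \<and> x j = y j \<and> x l = y l)"
      proof
        assume a: "u = 1 \<and> x j = y j \<and> x l = y l"
        have "x = y"
        proof
          fix i show "x i = y i" using z[of i] a by (cases "i = j \<or> i = l") auto
        qed
        thus False using h(6) a by blast
      qed
      moreover have "p dvd x j ^2 - x j - u*(y j^2 - y j)" "p dvd x l ^2 - x l - u*(y l^2 - y l)"
        "p dvd x j * x l - u * y j * y l"
        using h(4) assms jl by (auto simp: solQ_def)
      ultimately show "s \<in> T2" using h assms s(1) by (auto simp: T2_def Fz_def)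
    qed
    show "(\<lambda>(u,a1,b1,a2,b2). (delta2 j l a1 a2, u, delta2 j l b1 b2)) ` T2 \<subseteq> E2 Q j l"
    proof
      fix t assume "t \<in> (\<lambda>(u,a1,b1,a2,b2). (delta2 j l a1 a2, u, delta2 j l b1 b2)) ` T2"
      then obtain u a1 b1 a2 b2 where t: "t = (delta2 j l a1 a2, u, delta2 j l b1 b2)" "(u,a1,b1,a2,b2) \<in> T2"
        by auto
      have h: "u \<in> {1..<p}" "a1 \<in> {0..<p}" "b1 \<in> {0..<p}" "a2 \<in> {0..<p}" "b2 \<in> {0..<p}"
        "(a1,b1) \<noteq> (0,0)" "(a2,b2) \<noteq> (0,0)"
        "p dvd a1^2 - a1 - u*(b1^2 - b1)" "p dvd a2^2 - a2 - u*(b2^2 - b2)"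
        "p dvd a1*a2 - u*b1*b2" "\<not> (u = 1 \<and> a1 = b1 \<and> a2 = b2)" using t(2) by (auto simp: T2_def)
      have "delta2 j l a1 a2 \<in> Fz Q {0..<p}" "delta2 j l b1 b2 \<in> Fz Q {0..<p}"
        using h assms p2 by (auto simp: Fz_def delta2_def)
      moreover have "solQ Q (delta2 j l a1 a2) u (delta2 j l b1 b2)"
        using solQ_delta2[OF assms(1,2) jl(1)] h by blast
      moreover have "\<not> (u = 1 \<and> delta2 j l a1 a2 = delta2 j l b1 b2)"
      proof
        assume a: "u = 1 \<and> delta2 j l a1 a2 = delta2 j l b1 b2"
        hence "delta2 j l a1 a2 j = delta2 j l b1 b2 j" "delta2 j l a1 a2 l = delta2 j l b1 b2 l" by simp_all
        thus False using h(11) a jl by (simp add: delta2_def)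
      qed
      moreover have "supp (delta2 j l a1 a2) (delta2 j l b1 b2) = {j,l}"
        using h(6,7) jl by (auto simp: supp_def delta2_def)
      ultimately show "t \<in> E2 Q j l" using h t(1) by (auto simp: E2_def D2_iff)
    qed
  qed
  thus ?thesis by (rule bij_betw_same_card)
qed

end

definition Pairs :: "nat set \<Rightarrow> (nat \<times> nat) set" where
  "Pairs Q = {(j,l). j \<in> Q \<and> l \<in> Q \<and> j < l}"

lemma card_offdiag2: "card {(a,b). a \<in> A \<and> b \<in> A \<and> a \<noteq> b} = card A * card A - card A"
proof (cases "finite A")
  case True
  have e: "{(a,b). a \<in> A \<and> b \<in> A \<and> a \<noteq> b} = A \<times> A - (\<lambda>a. (a,a)) ` A" by auto
  have "card ((\<lambda>a. (a,a)) ` A) = card A" by (rule card_image) (auto simp: inj_on_def)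
  moreover have "(\<lambda>a. (a,a)) ` A \<subseteq> A \<times> A" by auto
  ultimately show ?thesis unfolding e using True
    by (simp add: card_Diff_subset card_cartesian_product finite_subset)
next
  case False
  hence "infinite (A \<times> A - (\<lambda>a. (a,a)) ` A)"
  proof -
    obtain a where "a \<in> A" using False by (metis ex_in_conv finite.emptyI)
    have "inj_on (\<lambda>b. (a,b)) (A - {a})" by (auto simp: inj_on_def)
    moreover have "infinite (A - {a})" using False by simp
    ultimately have "infinite ((\<lambda>b. (a,b)) ` (A - {a}))" using finite_imageD by blast
    moreover have "(\<lambda>b. (a,b)) ` (A - {a}) \<subseteq> A \<times> A - (\<lambda>a. (a,a)) ` A" using \<open>a \<in> A\<close> by auto
    ultimately show ?thesis using finite_subset by blast
  qed
  moreover have "{(a,b). a \<in> A \<and> b \<in> A \<and> a \<noteq> b} = A \<times> A - (\<lambda>a. (a,a)) ` A" by auto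
  ultimately show ?thesis using False by simp
qed

lemma finite_Pairs: assumes "finite Q" shows "finite (Pairs Q)"
proof -
  have "Pairs Q \<subseteq> Q \<times> Q" by (auto simp: Pairs_def)
  thus ?thesis using assms finite_subset by blast
qed

lemma card_Pairs: assumes "finite Q" shows "2 * card (Pairs Q) = card Q * card Q - card Q"
proof -
  have e: "{(a,b). a \<in> Q \<and> b \<in> Q \<and> a \<noteq> b} = Pairs Q \<union> (\<lambda>(a,b). (b,a)) ` Pairs Q"
  proof (rule set_eqI, rule iffI)
    fix t assume "t \<in> {(a,b). a \<in> Q \<and> b \<in> Q \<and> a \<noteq> b}"
    then obtain a b where t: "t = (a,b)" "a \<in> Q" "b \<in> Q" "a \<noteq> b" by auto
    show "t \<in> Pairs Q \<union> (\<lambda>(a,b). (b,a)) ` Pairs Q"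
    proof (cases "a < b")
      case True thus ?thesis using t by (auto simp: Pairs_def)
    next
      case False
      hence "(b,a) \<in> Pairs Q" using t by (auto simp: Pairs_def)
      hence "(a,b) \<in> (\<lambda>(a,b). (b,a)) ` Pairs Q" by (metis (no_types, lifting) case_prod_conv image_eqI)
      thus ?thesis using t by simp
    qed
  qed (auto simp: Pairs_def)
  have d: "Pairs Q \<inter> (\<lambda>(a,b). (b,a)) ` Pairs Q = {}" by (auto simp: Pairs_def)
  have f: "finite (Pairs Q)" using finite_Pairs[OF assms] .
  have i: "card ((\<lambda>(a,b). (b,a)) ` Pairs Q) = card (Pairs Q)"
    by (rule card_image) (auto simp: inj_on_def)
  have "card {(a,b). a \<in> Q \<and> b \<in> Q \<and> a \<noteq> b} = card (Pairs Q) + card (Pairs Q)"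
    unfolding e using d f i by (subst card_Un_disjoint) auto
  thus ?thesis using card_offdiag2[of Q] by simp
qed

context primeint begin

lemma finite_Dset: assumes "finite Q" shows "finite (Dset Q)"
proof -
  have "Dset Q \<subseteq> Fz Q {0..<p} \<times> {0..<p} \<times> Fz Q {0..<p}" by (auto simp: Dset_def)
  moreover have "finite (Fz Q {0..<p} \<times> {0..<p} \<times> Fz Q {0..<p})" using assms finite_Fz by auto
  ultimately show ?thesis by (rule finite_subset)
qed

lemma cardFz: "finite Q \<Longrightarrow> int (card (Fz Q {0..<p})) = p ^ card Q"
  using card_Fz[of Q "{0..<p}"] p2 by simp

lemma D0_eq: "{t \<in> Dset Q. fst (snd t) = 0} = (\<lambda>(x,y). (x,0,y)) ` (OH Q \<times> Fz Q {0..<p})"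
proof (rule set_eqI)
  fix t :: "(nat \<Rightarrow> int) \<times> int \<times> (nat \<Rightarrow> int)"
  obtain x u y where t: "t = (x,u,y)" by (cases t) auto
  show "t \<in> {t \<in> Dset Q. fst (snd t) = 0} \<longleftrightarrow> t \<in> (\<lambda>(x,y). (x,0,y)) ` (OH Q \<times> Fz Q {0..<p})"
    using p2 by (auto simp: t Dset_def OH_def solQ_def)
qed

lemma D1_eq: "{t \<in> Dset Q. fst (snd t) = 1 \<and> fst t = snd (snd t)} = (\<lambda>y. (y,1,y)) ` Fz Q {0..<p}"
proof (rule set_eqI)
  fix t :: "(nat \<Rightarrow> int) \<times> int \<times> (nat \<Rightarrow> int)"
  obtain x u y where t: "t = (x,u,y)" by (cases t) auto
  show "t \<in> {t \<in> Dset Q. fst (snd t) = 1 \<and> fst t = snd (snd t)} \<longleftrightarrow> t \<in> (\<lambda>y. (y,1,y)) ` Fz Q {0..<p}"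
    using p2 by (auto simp: t Dset_def solQ_def)
qed

lemma Z_eq: "{t \<in> D2 Q. supp (fst t) (snd (snd t)) = {}} = (\<lambda>u. (\<lambda>_. 0, u, \<lambda>_. 0)) ` {2..<p}"
proof (rule set_eqI)
  fix t :: "(nat \<Rightarrow> int) \<times> int \<times> (nat \<Rightarrow> int)"
  obtain x u y where t: "t = (x,u,y)" by (cases t) auto
  show "t \<in> {t \<in> D2 Q. supp (fst t) (snd (snd t)) = {}} \<longleftrightarrow> t \<in> (\<lambda>u. (\<lambda>_. 0, u, \<lambda>_. 0)) ` {2..<p}"
  proof
    assume "t \<in> {t \<in> D2 Q. supp (fst t) (snd (snd t)) = {}}"
    hence a: "(x,u,y) \<in> D2 Q" "supp x y = {}" using t by auto
    hence "x = (\<lambda>_. 0)" "y = (\<lambda>_. 0)" by (auto simp: supp_def fun_eq_iff)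
    moreover have "u \<in> {2..<p}" using a(1) \<open>x = (\<lambda>_. 0)\<close> \<open>y = (\<lambda>_. 0)\<close> by (auto simp: D2_iff)
    ultimately show "t \<in> (\<lambda>u. (\<lambda>_. 0, u, \<lambda>_. 0)) ` {2..<p}" using t by auto
  next
    assume "t \<in> (\<lambda>u. (\<lambda>_. 0, u, \<lambda>_. 0)) ` {2..<p}"
    then obtain v where v: "t = (\<lambda>_. 0, v, \<lambda>_. 0)" "v \<in> {2..<p}" by auto
    thus "t \<in> {t \<in> D2 Q. supp (fst t) (snd (snd t)) = {}}"
      by (auto simp: D2_iff Fz_def solQ_def supp_def)
  qed
qed

lemma D2_decomp: assumes "finite Q"
  shows "D2 Q = {t \<in> D2 Q. supp (fst t) (snd (snd t)) = {}} \<union> (\<Union>j\<in>Q. E1 Q j) \<union> (\<Union>(j,l)\<in>Pairs Q. E2 Q j l)"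
proof (rule set_eqI, rule iffI)
  fix t assume tD: "t \<in> D2 Q"
  obtain x u y where t: "t = (x,u,y)" by (cases t) auto
  have xD: "(x,u,y) \<in> D2 Q" using tD t by simp
  have sQ: "supp x y \<subseteq> Q" using xD by (auto simp: D2_iff Fz_def supp_def)
  have "supp x y = {} \<or> (\<exists>j. supp x y = {j}) \<or> (\<exists>j l. j < l \<and> supp x y = {j,l})"
    apply (rule no3_cases) using supp_no3[OF xD] by blast
  thus "t \<in> {t \<in> D2 Q. supp (fst t) (snd (snd t)) = {}} \<union> (\<Union>j\<in>Q. E1 Q j) \<union> (\<Union>(j,l)\<in>Pairs Q. E2 Q j l)"
  proof (elim disjE exE conjE)
    assume "supp x y = {}" thus ?thesis using xD t by auto
  next
    fix j assume j: "supp x y = {j}"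
    hence "j \<in> Q" using sQ by auto
    moreover have "t \<in> E1 Q j" using j xD t by (auto simp: E1_def)
    ultimately show ?thesis by blast
  next
    fix j l assume jl: "j < l" "supp x y = {j,l}"
    hence "(j,l) \<in> Pairs Q" using sQ by (auto simp: Pairs_def)
    moreover have "t \<in> E2 Q j l" using jl xD t by (auto simp: E2_def)
    ultimately show ?thesis by blast
  qed
next
  fix t assume "t \<in> {t \<in> D2 Q. supp (fst t) (snd (snd t)) = {}} \<union> (\<Union>j\<in>Q. E1 Q j) \<union> (\<Union>(j,l)\<in>Pairs Q. E2 Q j l)"
  thus "t \<in> D2 Q" by (auto simp: E1_def E2_def)
qed

lemma E1_sub: "E1 Q j \<subseteq> D2 Q" by (auto simp: E1_def)
lemma E2_sub: "E2 Q j l \<subseteq> D2 Q" by (auto simp: E2_def)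

lemma card_D2: assumes "finite Q"
  shows "int (card (D2 Q)) = (p - 2) + int (card Q) * (p^2 - 2*p + 2) + int (card (Pairs Q)) * (p^2 - 3*p + 4)"
proof -
  have fD: "finite (D2 Q)" using finite_Dset[OF assms] by (rule finite_subset[rotated]) (auto simp: D2_def)
  have fP: "finite (Pairs Q)" using finite_Pairs[OF assms] .
  let ?Z = "{t \<in> D2 Q. supp (fst t) (snd (snd t)) = {}}"
  let ?A = "\<Union>j\<in>Q. E1 Q j" and ?B = "\<Union>(j,l)\<in>Pairs Q. E2 Q j l"
  have fA: "finite ?A" by (rule finite_subset[OF _ fD]) (use E1_sub in blast)
  have fB: "finite ?B" by (rule finite_subset[OF _ fD]) (use E2_sub in blast)
  have fZ: "finite ?Z" using fD by simp
  have d1: "?Z \<inter> ?A = {}" by (auto simp: E1_def)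
  have d2: "(?Z \<union> ?A) \<inter> ?B = {}" by (auto simp: E1_def E2_def doubleton_eq_iff Pairs_def)
  have "card (D2 Q) = card ?Z + card ?A + card ?B"
    apply (subst D2_decomp[OF assms])
    apply (subst card_Un_disjoint[OF _ fB d2])
     apply (use fZ fA in simp)
    apply (subst card_Un_disjoint[OF fZ fA d1])
    by simp
  also have "card ?Z = nat (p - 2)" unfolding Z_eq by (subst card_image) (auto simp: inj_on_def)
  also have "card ?A = (\<Sum>j\<in>Q. card (E1 Q j))"
  proof (rule card_UN_disjoint[OF assms])
    show "\<forall>i\<in>Q. finite (E1 Q i)" using fD E1_sub finite_subset by blast
    show "\<forall>i\<in>Q. \<forall>j\<in>Q. i \<noteq> j \<longrightarrow> E1 Q i \<inter> E1 Q j = {}" by (auto simp: E1_def)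
  qed
  also have "\<dots> = card Q * card T1" using card_E1 by simp
  also have "card ?B = (\<Sum>(j,l)\<in>Pairs Q. card (E2 Q j l))"
  proof -
    have "card ?B = (\<Sum>pr\<in>Pairs Q. card ((\<lambda>(j,l). E2 Q j l) pr))"
    proof (rule card_UN_disjoint[OF fP])
      show "\<forall>i\<in>Pairs Q. finite ((\<lambda>(j, l). E2 Q j l) i)"
        by (auto intro: finite_subset[OF E2_sub fD])
      show "\<forall>i\<in>Pairs Q. \<forall>j\<in>Pairs Q. i \<noteq> j \<longrightarrow> (\<lambda>(j, l). E2 Q j l) i \<inter> (\<lambda>(j, l). E2 Q j l) j = {}"
        by (auto simp: Pairs_def E2_def doubleton_eq_iff)
    qed
    thus ?thesis by (simp add: case_prod_unfold)
  qed
  also have "\<dots> = card (Pairs Q) * card T2"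
  proof -
    have "(\<Sum>(j,l)\<in>Pairs Q. card (E2 Q j l)) = (\<Sum>(j,l)\<in>Pairs Q. card T2)"
      by (rule sum.cong) (auto simp: Pairs_def card_E2)
    thus ?thesis by simp
  qed
  finally have "card (D2 Q) = nat (p - 2) + card Q * card T1 + card (Pairs Q) * card T2" .
  hence "int (card (D2 Q)) = int (nat (p - 2)) + int (card Q) * int (card T1) + int (card (Pairs Q)) * int (card T2)"
    by simp
  moreover have "int (nat (p - 2)) = p - 2" using p2 by simp
  ultimately show ?thesis unfolding card_T1 card_T2 by simp
qed

theorem card_Dset: assumes "finite Q"
  shows "2 * int (card (Dset Q)) = 2 * (int (card Q) + 2) * p ^ card Q + 2 * (p - 2)
     + 2 * int (card Q) * (p^2 - 2*p + 2) + (int (card Q) * int (card Q) - int (card Q)) * (p^2 - 3*p + 4)"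
proof -
  let ?D0 = "{t \<in> Dset Q. fst (snd t) = 0}" and ?D1 = "{t \<in> Dset Q. fst (snd t) = 1 \<and> fst t = snd (snd t)}"
  have e: "Dset Q = ?D0 \<union> ?D1 \<union> D2 Q" by (auto simp: D2_def)
  have f: "finite (Dset Q)" using finite_Dset[OF assms] .
  have "card (Dset Q) = card ?D0 + card ?D1 + card (D2 Q)"
  proof -
    have f0: "finite ?D0" "finite ?D1" using f by auto
    have f2: "finite (D2 Q)" by (rule finite_subset[OF _ f]) (auto simp: D2_def)
    have "card (?D0 \<union> ?D1 \<union> D2 Q) = card (?D0 \<union> ?D1) + card (D2 Q)"
      by (rule card_Un_disjoint) (use f0 f2 in \<open>auto simp: D2_def\<close>)
    moreover have "card (?D0 \<union> ?D1) = card ?D0 + card ?D1"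
      by (rule card_Un_disjoint) (use f0 in auto)
    ultimately show ?thesis using e by simp
  qed
  moreover have "card ?D0 = card (OH Q) * card (Fz Q {0..<p})"
    unfolding D0_eq by (subst card_image) (auto simp: inj_on_def card_cartesian_product)
  moreover have "card ?D1 = card (Fz Q {0..<p})"
    unfolding D1_eq by (rule card_image) (auto simp: inj_on_def)
  ultimately have c1: "int (card (Dset Q)) = (int (card Q) + 1) * p ^ card Q + p ^ card Q + int (card (D2 Q))"
    using card_OH[OF assms] cardFz[OF assms] by (simp add: algebra_simps)
  have c2: "2 * int (card (Pairs Q)) = int (card Q) * int (card Q) - int (card Q)"
  proof -
    have "int (2 * card (Pairs Q)) = int (card Q * card Q - card Q)" using card_Pairs[OF assms] by simp
    moreover have "card Q \<le> card Q * card Q" by (simp add: le_square)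
    ultimately show ?thesis by (simp add: of_nat_diff)
  qed
  have c3: "int (card (D2 Q)) = (p - 2) + int (card Q) * (p^2 - 2*p + 2) + int (card (Pairs Q)) * (p^2 - 3*p + 4)"
    using card_D2[OF assms] .
  have "2 * int (card (Dset Q)) = 2 * (int (card Q) + 2) * p ^ card Q + 2 * (p - 2)
     + 2 * int (card Q) * (p^2 - 2*p + 2) + (2 * int (card (Pairs Q))) * (p^2 - 3*p + 4)"
    unfolding c1 c3 by (simp add: algebra_simps)
  thus ?thesis unfolding c2 .
qed

end

context primeint begin

definition Eset :: "nat set \<Rightarrow> (int \<times> (nat \<Rightarrow> int)) set" where
  "Eset Q = {(u,y). u \<in> {0..<p} \<and> y \<in> Fz Q {0..<p} \<and> solQ Q (\<lambda>_. 0) u y}"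

lemma Eset_eq: "Eset Q = (\<lambda>y. (0,y)) ` Fz Q {0..<p} \<union> {1..<p} \<times> OH Q"
proof (rule set_eqI)
  fix t :: "int \<times> (nat \<Rightarrow> int)"
  obtain u y where t: "t = (u,y)" by (cases t) auto
  show "t \<in> Eset Q \<longleftrightarrow> t \<in> (\<lambda>y. (0,y)) ` Fz Q {0..<p} \<union> {1..<p} \<times> OH Q"
  proof
    assume "t \<in> Eset Q"
    hence h: "u \<in> {0..<p}" "y \<in> Fz Q {0..<p}" "solQ Q (\<lambda>_. 0) u y" by (auto simp: Eset_def t)
    show "t \<in> (\<lambda>y. (0,y)) ` Fz Q {0..<p} \<union> {1..<p} \<times> OH Q"
    proof (cases "u = 0")
      case True thus ?thesis using h t by auto
    next
      case False
      hence pu: "\<not> p dvd u" using h dvd_range by auto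
      have "\<forall>i\<in>Q. p dvd y i ^ 2 - y i"
      proof
        fix i assume "i \<in> Q"
        hence "p dvd u * (-(y i ^ 2 - y i))" using h(3) by (simp add: solQ_def algebra_simps)
        hence "p dvd -(y i ^ 2 - y i)" using pu dvd_mult by blast
        thus "p dvd y i ^ 2 - y i" by (simp only: dvd_minus_iff)
      qed
      moreover have "\<forall>i\<in>Q. \<forall>j\<in>Q. i \<noteq> j \<longrightarrow> p dvd y i * y j"
      proof (intro ballI impI)
        fix i j assume "i \<in> Q" "j \<in> Q" "i \<noteq> j"
        hence "p dvd u * (-(y i * y j))" using h(3) by (simp add: solQ_def algebra_simps)
        hence "p dvd -(y i * y j)" using pu dvd_mult by blast
        thus "p dvd y i * y j" by (simp only: dvd_minus_iff)
      qed
      ultimately have "y \<in> OH Q" using h by (simp add: OH_def)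
      thus ?thesis using h False t by auto
    qed
  next
    assume "t \<in> (\<lambda>y. (0,y)) ` Fz Q {0..<p} \<union> {1..<p} \<times> OH Q"
    thus "t \<in> Eset Q"
    proof
      assume "t \<in> (\<lambda>y. (0,y)) ` Fz Q {0..<p}"
      thus "t \<in> Eset Q" using p2 by (auto simp: Eset_def t solQ_def)
    next
      assume "t \<in> {1..<p} \<times> OH Q"
      hence h: "u \<in> {1..<p}" "y \<in> OH Q" using t by auto
      have "solQ Q (\<lambda>_. 0) u y" unfolding solQ_def
      proof (intro conjI ballI impI)
        fix i j assume "i \<in> Q" "j \<in> Q" "i \<noteq> j"
        hence "p dvd y i * y j" using h(2) by (auto simp: OH_def)
        hence "p dvd u * (y i * y j)" by simp
        thus "p dvd 0 * 0 - u * y i * y j" by (simp add: mult.assoc)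
      next
        fix i assume "i \<in> Q"
        hence "p dvd y i ^ 2 - y i" using h(2) by (auto simp: OH_def)
        thus "p dvd 0 ^ 2 - 0 - u * (y i ^ 2 - y i)" by simp
      qed
      thus "t \<in> Eset Q" using h t by (auto simp: Eset_def OH_def)
    qed
  qed
qed

lemma card_Eset: assumes "finite Q" shows "int (card (Eset Q)) = p ^ card Q + (p - 1) * (int (card Q) + 1)"
proof -
  have "card (Eset Q) = card ((\<lambda>y. (0::int,y)) ` Fz Q {0..<p}) + card ({1..<p} \<times> OH Q)"
    unfolding Eset_eq
    by (rule card_Un_disjoint) (use finite_Fz[OF assms] assms in \<open>auto simp: OH_def\<close>)
  also have "card ((\<lambda>y. (0::int,y)) ` Fz Q {0..<p}) = card (Fz Q {0..<p})" by (rule card_image) (auto simp: inj_on_def)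
  finally have "int (card (Eset Q)) = int (card (Fz Q {0..<p})) + int (card {1..<p}) * int (card (OH Q))"
    by (simp add: card_cartesian_product)
  thus ?thesis using cardFz[OF assms] card_OH[OF assms] p2 by simp
qed

definition condP :: "nat set \<Rightarrow> nat set \<Rightarrow> (nat \<Rightarrow> int) \<Rightarrow> bool" where
  "condP P Q x \<longleftrightarrow> (\<forall>i\<in>P. p dvd x i ^ 2 - x i) \<and> (\<forall>i\<in>P. \<forall>j\<in>P \<union> Q. i \<noteq> j \<longrightarrow> p dvd x i * x j)"

definition Vmod :: "nat set \<Rightarrow> nat set \<Rightarrow> ((nat \<Rightarrow> int) \<times> int \<times> (nat \<Rightarrow> int)) set" where
  "Vmod P Q = {(x,u,y). x \<in> Fz (P \<union> Q) {0..<p} \<and> u \<in> {0..<p} \<and> y \<in> Fz Q {0..<p} \<and> condP P Q x \<and> solQ Q x u y}"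

lemma solQ_cong: "(\<And>i. i \<in> Q \<Longrightarrow> x i = x' i) \<Longrightarrow> solQ Q x u y = solQ Q x' u y"
  by (simp add: solQ_def)

lemma Vmod0: assumes "P \<inter> Q = {}" shows "{t \<in> Vmod P Q. \<forall>i\<in>P. fst t i = 0} = Dset Q"
proof (rule set_eqI)
  fix t :: "(nat \<Rightarrow> int) \<times> int \<times> (nat \<Rightarrow> int)"
  obtain x u y where t: "t = (x,u,y)" by (cases t) auto
  show "t \<in> {t \<in> Vmod P Q. \<forall>i\<in>P. fst t i = 0} \<longleftrightarrow> t \<in> Dset Q"
  proof
    assume "t \<in> {t \<in> Vmod P Q. \<forall>i\<in>P. fst t i = 0}"
    hence h: "x \<in> Fz (P \<union> Q) {0..<p}" "u \<in> {0..<p}" "y \<in> Fz Q {0..<p}" "solQ Q x u y" "\<forall>i\<in>P. x i = 0"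
      by (auto simp: Vmod_def t)
    have "x \<in> Fz Q {0..<p}" using h(1,5) by (auto simp: Fz_def)
    thus "t \<in> Dset Q" using h by (auto simp: Dset_def t)
  next
    assume "t \<in> Dset Q"
    hence h: "x \<in> Fz Q {0..<p}" "u \<in> {0..<p}" "y \<in> Fz Q {0..<p}" "solQ Q x u y" by (auto simp: Dset_def t)
    have z: "\<forall>i\<in>P. x i = 0" using h(1) assms by (auto simp: Fz_def)
    have "x \<in> Fz (P \<union> Q) {0..<p}" using h(1) p2 by (auto simp: Fz_def)
    moreover have "condP P Q x" using z by (simp add: condP_def)
    ultimately show "t \<in> {t \<in> Vmod P Q. \<forall>i\<in>P. fst t i = 0}" using h z by (auto simp: Vmod_def t)
  qed
qed

lemma Vmod1: assumes "P \<inter> Q = {}"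
  shows "{t \<in> Vmod P Q. \<not> (\<forall>i\<in>P. fst t i = 0)} = (\<Union>j\<in>P. (\<lambda>(u,y). (delta j 1, u, y)) ` Eset Q)"
proof (rule set_eqI)
  fix t :: "(nat \<Rightarrow> int) \<times> int \<times> (nat \<Rightarrow> int)"
  obtain x u y where t: "t = (x,u,y)" by (cases t) auto
  show "t \<in> {t \<in> Vmod P Q. \<not> (\<forall>i\<in>P. fst t i = 0)} \<longleftrightarrow> t \<in> (\<Union>j\<in>P. (\<lambda>(u,y). (delta j 1, u, y)) ` Eset Q)"
  proof
    assume "t \<in> {t \<in> Vmod P Q. \<not> (\<forall>i\<in>P. fst t i = 0)}"
    hence h: "x \<in> Fz (P \<union> Q) {0..<p}" "u \<in> {0..<p}" "y \<in> Fz Q {0..<p}" "solQ Q x u y" "condP P Q x"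
      "\<exists>i\<in>P. x i \<noteq> 0" by (auto simp: Vmod_def t)
    obtain j where j: "j \<in> P" "x j \<noteq> 0" using h(6) by blast
    have rng: "\<And>i. i \<in> P \<union> Q \<Longrightarrow> x i \<in> {0..<p}" using h(1) by (auto simp: Fz_def)
    have "p dvd x j ^ 2 - x j" using h(5) j by (auto simp: condP_def)
    hence xj: "x j = 1" using idem_range rng[of j] j by auto
    have "x = delta j 1"
    proof
      fix i show "x i = delta j 1 i"
      proof (cases "i = j")
        case True thus ?thesis using xj by (simp add: delta_def)
      next
        case False
        show ?thesis
        proof (cases "i \<in> P \<union> Q")
          case True
          hence "p dvd x j * x i" using h(5) j False by (auto simp: condP_def)
          hence "p dvd x i" using xj by simp
          hence "x i = 0" using dvd_range rng[OF True] by auto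
          thus ?thesis using False by (simp add: delta_def)
        next
          case False
          thus ?thesis using h(1) \<open>i \<noteq> j\<close> by (auto simp: Fz_def delta_def)
        qed
      qed
    qed
    have "j \<notin> Q" using j assms by auto
    have "solQ Q (\<lambda>_. 0) u y = solQ Q (delta j 1) u y"
      by (rule solQ_cong) (use \<open>j \<notin> Q\<close> in \<open>auto simp: delta_def\<close>)
    hence "solQ Q (\<lambda>_. 0) u y" using h(4) \<open>x = delta j 1\<close> by simp
    hence "(u,y) \<in> Eset Q" using h by (auto simp: Eset_def)
    with \<open>x = delta j 1\<close> show "t \<in> (\<Union>j\<in>P. (\<lambda>(u,y). (delta j 1, u, y)) ` Eset Q)" using t j by auto
  next
    assume "t \<in> (\<Union>j\<in>P. (\<lambda>(u,y). (delta j 1, u, y)) ` Eset Q)"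
    then obtain j where j: "j \<in> P" "x = delta j 1" "(u,y) \<in> Eset Q" using t by auto
    have h: "u \<in> {0..<p}" "y \<in> Fz Q {0..<p}" "solQ Q (\<lambda>_. 0) u y" using j(3) by (auto simp: Eset_def)
    have "j \<notin> Q" using j assms by auto
    moreover have "solQ Q (\<lambda>_. 0) u y = solQ Q (delta j 1) u y"
      by (rule solQ_cong) (use \<open>j \<notin> Q\<close> in \<open>auto simp: delta_def\<close>)
    ultimately have "solQ Q x u y" using h(3) j(2) by simp
    moreover have "x \<in> Fz (P \<union> Q) {0..<p}" using j p2 by (auto simp: Fz_def delta_def)
    moreover have "condP P Q x" using j by (auto simp: condP_def delta_def)
    moreover have "\<not> (\<forall>i\<in>P. x i = 0)" using j by (auto simp: delta_def)
    ultimately show "t \<in> {t \<in> Vmod P Q. \<not> (\<forall>i\<in>P. fst t i = 0)}" using h t by (auto simp: Vmod_def)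
  qed
qed

lemma card_Vmod: assumes "finite P" "finite Q" "P \<inter> Q = {}"
  shows "card (Vmod P Q) = card (Dset Q) + card P * card (Eset Q)"
proof -
  have fV: "finite (Vmod P Q)"
  proof -
    have "Vmod P Q \<subseteq> Fz (P \<union> Q) {0..<p} \<times> {0..<p} \<times> Fz Q {0..<p}" by (auto simp: Vmod_def)
    moreover have "finite (Fz (P \<union> Q) {0..<p} \<times> {0..<p} \<times> Fz Q {0..<p})" using assms finite_Fz by auto
    ultimately show ?thesis by (rule finite_subset)
  qed
  have fE: "finite (Eset Q)"
  proof -
    have "Eset Q \<subseteq> {0..<p} \<times> Fz Q {0..<p}" by (auto simp: Eset_def)
    moreover have "finite ({0..<p} \<times> Fz Q {0..<p})" using assms finite_Fz by auto
    ultimately show ?thesis by (rule finite_subset)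
  qed
  have "card (Vmod P Q) = card {t \<in> Vmod P Q. \<forall>i\<in>P. fst t i = 0} + card {t \<in> Vmod P Q. \<not> (\<forall>i\<in>P. fst t i = 0)}"
  proof -
    have "Vmod P Q = {t \<in> Vmod P Q. \<forall>i\<in>P. fst t i = 0} \<union> {t \<in> Vmod P Q. \<not> (\<forall>i\<in>P. fst t i = 0)}" by blast
    moreover have "card ({t \<in> Vmod P Q. \<forall>i\<in>P. fst t i = 0} \<union> {t \<in> Vmod P Q. \<not> (\<forall>i\<in>P. fst t i = 0)})
       = card {t \<in> Vmod P Q. \<forall>i\<in>P. fst t i = 0} + card {t \<in> Vmod P Q. \<not> (\<forall>i\<in>P. fst t i = 0)}"
      by (rule card_Un_disjoint) (use fV in auto)
    ultimately show ?thesis by simp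
  qed
  also have "card {t \<in> Vmod P Q. \<forall>i\<in>P. fst t i = 0} = card (Dset Q)" using Vmod0[OF assms(3)] by simp
  also have "card {t \<in> Vmod P Q. \<not> (\<forall>i\<in>P. fst t i = 0)} = (\<Sum>j\<in>P. card ((\<lambda>(u,y). (delta j 1, u, y)) ` Eset Q))"
    unfolding Vmod1[OF assms(3)]
  proof (rule card_UN_disjoint[OF assms(1)])
    show "\<forall>i\<in>P. finite ((\<lambda>(u, y). (delta i 1, u, y)) ` Eset Q)" using fE by auto
    show "\<forall>i\<in>P. \<forall>j\<in>P. i \<noteq> j \<longrightarrow> (\<lambda>(u, y). (delta i 1, u, y)) ` Eset Q \<inter> (\<lambda>(u, y). (delta j 1, u, y)) ` Eset Q = {}"
    proof (intro ballI impI)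
      fix i j assume "i \<in> P" "j \<in> P" "i \<noteq> j"
      have "delta i (1::int) \<noteq> delta j 1"
      proof
        assume "delta i (1::int) = delta j 1"
        hence "delta i (1::int) i = delta j 1 i" by simp
        thus False using \<open>i \<noteq> j\<close> by (simp add: delta_def)
      qed
      thus "(\<lambda>(u, y). (delta i 1, u, y)) ` Eset Q \<inter> (\<lambda>(u, y). (delta j 1, u, y)) ` Eset Q = {}" by auto
    qed
  qed
  also have "\<dots> = (\<Sum>j\<in>P. card (Eset Q))"
  proof (rule sum.cong)
    fix j show "card ((\<lambda>(u,y). (delta j 1, u, y)) ` Eset Q) = card (Eset Q)"
      by (rule card_image) (auto simp: inj_on_def)
  qed simp
  finally show ?thesis by simp
qed

end

locale mat = primeint "int pn" for pn :: nat +
  fixes n k :: nat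
  assumes n3: "3 \<le> n" and k1: "1 \<le> k" and kn: "k \<le> n - 2"
begin

abbreviation "m \<equiv> n - 1"
abbreviation p :: int where "p \<equiv> int pn"

definition d :: "nat \<Rightarrow> int" where
  "d r = (if r = 0 then p^3 else if r = k then p^2 else p)"

definition M :: "(nat \<Rightarrow> int) \<Rightarrow> (nat \<Rightarrow> int) \<Rightarrow> nat \<Rightarrow> nat \<Rightarrow> int" where
  "M a b r s = (if n \<le> r \<or> n \<le> s then 0 else
     (if s = m then 1 else 0) + (if s = r \<and> r < m then d r else 0) + (if r = 0 then p * a s else 0)
     + (if r = k then p * b s else 0))"

definition R :: "nat set" where "R = {1..<m} - {k}"
definition Q :: "nat set" where "Q = {k<..<m}"
definition Pk :: "nat set" where "Pk = {1..<k}"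

definition dom :: "((nat \<Rightarrow> int) \<times> (nat \<Rightarrow> int)) set" where
  "dom = {(a,b). a \<in> Fz {1..<m} {0..<p^2} \<and> b \<in> Fz Q {0..<p}}"

lemma k_facts: "0 < k" "k < m" "k \<noteq> m" "0 < m" "m < n" "Suc m = n" "k \<noteq> 0" "0 \<noteq> k" using n3 k1 kn by auto

lemma QR: "Q \<subseteq> R" using k_facts by (auto simp: Q_def R_def)
lemma kR: "k \<notin> R" by (simp add: R_def)
lemma R_facts: "i \<in> R \<Longrightarrow> 0 < i \<and> i < m \<and> i \<noteq> k" by (auto simp: R_def)

lemma dom_zero:
  assumes "(a,b) \<in> dom"
  shows "\<And>s. s \<notin> R \<Longrightarrow> s \<noteq> k \<Longrightarrow> a s = 0" "\<And>s. s \<notin> Q \<Longrightarrow> b s = 0" "a 0 = 0" "a m = 0"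
    "b 0 = 0" "b k = 0" "b m = 0"
  using assms k_facts by (auto simp: dom_def Fz_def R_def Q_def)

lemma sum_delta2: "(\<Sum>s<n. (if s = i \<and> s = j then X else 0)) = (if i = j \<and> i < n then X else (0::int))"
proof (cases "i = j \<and> i < n")
  case True
  hence "(\<Sum>s<n. (if s = i \<and> s = j then X else 0)) = (\<Sum>s<n. (if s = i then X else 0))"
    by (intro sum.cong) auto
  also have "\<dots> = X" using True by simp
  finally show ?thesis using True by simp
next
  case False
  hence "(\<Sum>s<n. (if s = i \<and> s = j then X else 0)) = (\<Sum>s<n. (0::int))"
    by (intro sum.cong) auto
  moreover have "(if i = j \<and> i < n then X else 0) = (0::int)" using False by (rule if_not_P)
  ultimately show ?thesis by simp
qed

lemma rowsum:
  assumes "r < n"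
  shows "(\<Sum>s<n. c s * M a b r s) = c m + (if r < m then d r * c r else 0)
     + (if r = 0 then p * (\<Sum>s<n. a s * c s) else 0) + (if r = k then p * (\<Sum>s<n. b s * c s) else 0)"
proof -
  have "(\<Sum>s<n. c s * M a b r s) = (\<Sum>s<n. (if s = m then c s else 0) + (if s = r \<and> r < m then d r * c s else 0)
      + (if r = 0 then p * (a s * c s) else 0) + (if r = k then p * (b s * c s) else 0))"
    by (rule sum.cong) (use assms in \<open>auto simp: M_def algebra_simps\<close>)
  also have "\<dots> = (\<Sum>s<n. (if s = m then c s else 0)) + (\<Sum>s<n. (if s = r \<and> r < m then d r * c s else 0))
      + (\<Sum>s<n. (if r = 0 then p * (a s * c s) else 0)) + (\<Sum>s<n. (if r = k then p * (b s * c s) else 0))"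
    by (simp add: sum.distrib)
  also have "(\<Sum>s<n. (if s = m then c s else 0)) = c m" using k_facts by simp
  also have "(\<Sum>s<n. (if s = r \<and> r < m then d r * c s else 0)) = (if r < m then d r * c r else 0)"
    using assms by (cases "r < m") auto
  also have "(\<Sum>s<n. (if r = 0 then p * (a s * c s) else 0)) = (if r = 0 then p * (\<Sum>s<n. a s * c s) else 0)"
    by (simp add: sum_distrib_left)
  also have "(\<Sum>s<n. (if r = k then p * (b s * c s) else 0)) = (if r = k then p * (\<Sum>s<n. b s * c s) else 0)"
    by (simp add: sum_distrib_left)
  finally show ?thesis .
qed

lemma col_entry:
  assumes "r < n" "i < m"
  shows "M a b r i = (if i = r then d r else 0) + (if r = 0 then p * a i else 0) + (if r = k then p * b i else 0)"
  using assms k_facts by (auto simp: M_def)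

definition pair_ok :: "(nat \<Rightarrow> int) \<Rightarrow> (nat \<Rightarrow> int) \<Rightarrow> nat \<Rightarrow> nat \<Rightarrow> bool" where
  "pair_ok a b i j \<longleftrightarrow> (\<exists>ck c0. M a b k i * M a b k j = p^2 * ck + (if i = j then p^2 * b i else 0) \<and>
      M a b 0 i * M a b 0 j = p^3 * c0 + (if i = j \<and> i \<in> R then p^2 * a i else 0) + p * a k * ck)"

lemma span_prod:
  assumes ab: "(a,b) \<in> dom" and ij: "i < m" "j < m"
  shows "in_col_span n (M a b) (\<lambda>r. M a b r i * M a b r j) \<longleftrightarrow> pair_ok a b i j"
proof
  have dz: "\<And>s. s \<notin> R \<Longrightarrow> s \<noteq> k \<Longrightarrow> a s = 0" "\<And>s. s \<notin> Q \<Longrightarrow> b s = 0"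
    using dom_zero[OF ab] by auto
  assume "in_col_span n (M a b) (\<lambda>r. M a b r i * M a b r j)"
  then obtain c where c: "\<And>r. r < n \<Longrightarrow> M a b r i * M a b r j = (\<Sum>s<n. c s * M a b r s)"
    unfolding in_col_span_def by blast
  have cm: "c m = 0"
  proof -
    have "M a b m i * M a b m j = (\<Sum>s<n. c s * M a b m s)" using c k_facts by simp
    thus ?thesis using rowsum[of m c a b] col_entry[of m i a b] col_entry[of m j a b] ij k_facts by simp
  qed
  have cR: "\<And>r. r \<in> R \<Longrightarrow> c r = (if r = i \<and> r = j then p else 0)"
  proof -
    fix r assume r: "r \<in> R"
    have rn: "r < n" "r < m" "r \<noteq> 0" "r \<noteq> k" using R_facts[OF r] k_facts by auto
    have "M a b r i * M a b r j = (\<Sum>s<n. c s * M a b r s)" using c rn by simp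
    moreover have "(\<Sum>s<n. c s * M a b r s) = p * c r"
      using rowsum[of r c a b] rn cm by (simp add: d_def)
    moreover have "M a b r i = (if i = r then p else 0)" "M a b r j = (if j = r then p else 0)"
      using col_entry[of r i a b] col_entry[of r j a b] rn ij by (simp_all add: d_def)
    ultimately have "(if i = r then p else 0) * (if j = r then p else 0) = p * c r" by simp
    thus "c r = (if r = i \<and> r = j then p else 0)" using p2 by (auto split: if_splits)
  qed
  have sb: "(\<Sum>s<n. b s * c s) = (if i = j then p * b i else 0)"
  proof -
    have "(\<Sum>s<n. b s * c s) = (\<Sum>s<n. (if s = i \<and> s = j then p * b i else 0))"
    proof (rule sum.cong)
      fix s assume "s \<in> {..<n}"
      show "b s * c s = (if s = i \<and> s = j then p * b i else 0)"
      proof (cases "s \<in> Q")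
        case True
        hence "s \<in> R" using QR by auto
        hence "c s = (if s = i \<and> s = j then p else 0)" by (rule cR)
        thus ?thesis by auto
      next
        case False thus ?thesis using dz(2)[of s] by auto
      qed
    qed simp
    thus ?thesis using sum_delta2 ij k_facts by simp
  qed
  have sa: "(\<Sum>s<n. a s * c s) = a k * c k + (if i = j \<and> i \<in> R then p * a i else 0)"
  proof -
    have "(\<Sum>s<n. a s * c s) = (\<Sum>s<n. (if s = k then a k * c k else 0) + (if s = i \<and> s = j then (if i \<in> R then p * a i else 0) else 0))"
    proof (rule sum.cong)
      fix s assume "s \<in> {..<n}"
      show "a s * c s = (if s = k then a k * c k else 0) + (if s = i \<and> s = j then (if i \<in> R then p * a i else 0) else 0)"
      proof (cases "s \<in> R")
        case True
        have sk: "s \<noteq> k" using R_facts[OF True] by simp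
        have "c s = (if s = i \<and> s = j then p else 0)" using cR[OF True] .
        thus ?thesis using sk True by auto
      next
        case False
        show ?thesis
        proof (cases "s = k")
          case True thus ?thesis using kR by auto
        next
          case False
          thus ?thesis using dz(1)[of s] \<open>s \<notin> R\<close> by auto
        qed
      qed
    qed simp
    also have "\<dots> = a k * c k + (if i = j \<and> i \<in> R then p * a i else 0)"
      using sum_delta2[of i j "if i \<in> R then p * a i else 0"] ij k_facts by (simp add: sum.distrib)
    finally show ?thesis .
  qed
  have rk: "M a b k i * M a b k j = p^2 * c k + p * (if i = j then p * b i else 0)"
    using c[of k] rowsum[of k c a b] k_facts cm sb by (simp add: d_def)
  have r0: "M a b 0 i * M a b 0 j = p^3 * c 0 + p * (a k * c k + (if i = j \<and> i \<in> R then p * a i else 0))"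
    using c[of 0] rowsum[of 0 c a b] k_facts cm sa by (simp add: d_def)
  show "pair_ok a b i j" unfolding pair_ok_def
    by (rule exI[of _ "c k"], rule exI[of _ "c 0"]) (use rk r0 in \<open>auto simp: algebra_simps power2_eq_square\<close>)
next
  assume "pair_ok a b i j"
  then obtain ck c0 where e: "M a b k i * M a b k j = p^2 * ck + (if i = j then p^2 * b i else 0)"
    "M a b 0 i * M a b 0 j = p^3 * c0 + (if i = j \<and> i \<in> R then p^2 * a i else 0) + p * a k * ck"
    unfolding pair_ok_def by blast
  have dz: "\<And>s. s \<notin> R \<Longrightarrow> s \<noteq> k \<Longrightarrow> a s = 0" "\<And>s. s \<notin> Q \<Longrightarrow> b s = 0"
    using dom_zero[OF ab] by auto
  define c where "c s = (if s = 0 then c0 else if s = k then ck else if s \<in> R \<and> s = i \<and> s = j then p else 0)" for s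
  have cm: "c m = 0" using k_facts by (auto simp: c_def R_def)
  have cR: "\<And>r. r \<in> R \<Longrightarrow> c r = (if r = i \<and> r = j then p else 0)"
    using R_facts by (auto simp: c_def)
  have sb: "(\<Sum>s<n. b s * c s) = (if i = j then p * b i else 0)"
  proof -
    have "(\<Sum>s<n. b s * c s) = (\<Sum>s<n. (if s = i \<and> s = j then p * b i else 0))"
    proof (rule sum.cong)
      fix s assume "s \<in> {..<n}"
      show "b s * c s = (if s = i \<and> s = j then p * b i else 0)"
      proof (cases "s \<in> Q")
        case True
        hence "s \<in> R" using QR by auto
        hence "c s = (if s = i \<and> s = j then p else 0)" by (rule cR)
        thus ?thesis by auto
      next
        case False thus ?thesis using dz(2)[of s] by auto
      qed
    qed simp
    thus ?thesis using sum_delta2 ij k_facts by simp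
  qed
  have sa: "(\<Sum>s<n. a s * c s) = a k * c k + (if i = j \<and> i \<in> R then p * a i else 0)"
  proof -
    have "(\<Sum>s<n. a s * c s) = (\<Sum>s<n. (if s = k then a k * c k else 0) + (if s = i \<and> s = j then (if i \<in> R then p * a i else 0) else 0))"
    proof (rule sum.cong)
      fix s assume "s \<in> {..<n}"
      show "a s * c s = (if s = k then a k * c k else 0) + (if s = i \<and> s = j then (if i \<in> R then p * a i else 0) else 0)"
      proof (cases "s \<in> R")
        case True
        have sk: "s \<noteq> k" using R_facts[OF True] by simp
        have "c s = (if s = i \<and> s = j then p else 0)" using cR[OF True] .
        thus ?thesis using sk True by auto
      next
        case False
        show ?thesis
        proof (cases "s = k")
          case True thus ?thesis using kR by auto
        next
          case False
          thus ?thesis using dz(1)[of s] \<open>s \<notin> R\<close> by auto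
        qed
      qed
    qed simp
    also have "\<dots> = a k * c k + (if i = j \<and> i \<in> R then p * a i else 0)"
      using sum_delta2[of i j "if i \<in> R then p * a i else 0"] ij k_facts by (simp add: sum.distrib)
    finally show ?thesis .
  qed
  show "in_col_span n (M a b) (\<lambda>r. M a b r i * M a b r j)" unfolding in_col_span_def
  proof (rule exI[of _ c], intro allI impI)
    fix r assume r: "r < n"
    show "M a b r i * M a b r j = (\<Sum>s<n. c s * M a b r s)"
    proof (cases "r = 0")
      case True
      have "c 0 = c0" "c k = ck" using k_facts by (auto simp: c_def)
      moreover have "p * (if i = j \<and> i \<in> R then p * a i else 0) = (if i = j \<and> i \<in> R then p^2 * a i else 0)"
      proof (cases "i = j \<and> i \<in> R")
        case True thus ?thesis by (simp add: power2_eq_square)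
      next
        case False
        hence "(if i = j \<and> i \<in> R then p * a i else 0) = 0" "(if i = j \<and> i \<in> R then p^2 * a i else 0) = 0"
          by (rule if_not_P)+
        thus ?thesis by simp
      qed
      ultimately show ?thesis using True rowsum[OF r, of c a b] sa cm e(2) k_facts
        by (cases "i = j \<and> i \<in> R") (simp_all add: d_def algebra_simps power3_eq_cube)
    next
      case r0: False
      show ?thesis
      proof (cases "r = k")
        case True
        have "c k = ck" using k_facts by (auto simp: c_def)
        thus ?thesis using True rowsum[OF r, of c a b] sb cm e(1) k_facts
          by (simp add: d_def algebra_simps power2_eq_square)
      next
        case rk: False
        show ?thesis
        proof (cases "r = m")
          case True
          thus ?thesis using rowsum[OF r, of c a b] cm col_entry[OF r, of i a b] col_entry[OF r, of j a b] ij k_facts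
            by auto
        next
          case False
          hence rR: "r \<in> R" using r r0 rk by (auto simp: R_def)
          thus ?thesis using rowsum[OF r, of c a b] cm cR[OF rR] col_entry[OF r, of i a b] col_entry[OF r, of j a b]
            ij r0 rk R_facts[OF rR] by (auto simp: d_def)
        qed
      qed
    qed
  qed
qed

end

context mat begin

definition condI :: "(nat \<Rightarrow> int) \<Rightarrow> (nat \<Rightarrow> int) \<Rightarrow> bool" where
  "condI a b \<longleftrightarrow> p dvd a k \<and> (\<forall>i\<in>R. \<forall>j\<in>R. i \<noteq> j \<longrightarrow> p^2 dvd p * a i * a j - a k * b i * b j) \<and>
     (\<forall>i\<in>R. p^2 dvd p * (a i^2 - a i) - a k * (b i^2 - b i))"

lemma pnz: "p \<noteq> 0" using p2 by simp

lemma alpha: "i < m \<Longrightarrow> M a b 0 i = (if i = 0 then p^3 else 0) + p * a i"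
  using col_entry[of 0 i a b] k_facts by (simp add: d_def)
lemma beta: "i < m \<Longrightarrow> M a b k i = (if i = k then p^2 else 0) + p * b i"
  using col_entry[of k i a b] k_facts by (simp add: d_def)

lemma cancel2: "p^2 * x = p^2 * y \<Longrightarrow> x = y" using pnz by simp
lemma cancel1: "p * x = p * y \<Longrightarrow> x = y" using pnz by simp

lemma closure_imp_cond:
  assumes ab: "(a,b) \<in> dom" and all: "\<forall>i<m. \<forall>j<m. pair_ok a b i j"
  shows "condI a b"
proof -
  have bz: "b k = 0" using dom_zero[OF ab] by simp
  have "p dvd a k"
  proof -
    have "pair_ok a b k k" using all k_facts by auto
    then obtain ck c0 where e0: "M a b k k * M a b k k = p^2 * ck + (if k = k then p^2 * b k else 0)"
      "M a b 0 k * M a b 0 k = p^3 * c0 + (if k = k \<and> k \<in> R then p^2 * a k else 0) + p * a k * ck"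
      unfolding pair_ok_def by blast
    hence e: "M a b k k * M a b k k = p^2 * ck + p^2 * b k"
      "M a b 0 k * M a b 0 k = p^3 * c0 + p * a k * ck" using kR by auto
    have "p^2 * p^2 = p^2 * ck" using e(1) beta[of k a b] bz k_facts by simp
    hence ck: "ck = p^2" using cancel2 by metis
    have "p^2 * (a k * a k) = p^2 * (p * c0 + p * a k)"
      using e(2) alpha[of k a b] k_facts ck by (simp add: algebra_simps power2_eq_square power3_eq_cube)
    hence "a k * a k = p * (c0 + a k)" using cancel2 by (metis distrib_left)
    hence "p dvd a k * a k" by simp
    thus ?thesis using dvd_mult by blast
  qed
  moreover have "\<forall>i\<in>R. \<forall>j\<in>R. i \<noteq> j \<longrightarrow> p^2 dvd p * a i * a j - a k * b i * b j"
  proof (intro ballI impI)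
    fix i j assume ij: "i \<in> R" "j \<in> R" "i \<noteq> j"
    have f: "i < m" "j < m" "i \<noteq> 0" "j \<noteq> 0" "i \<noteq> k" "j \<noteq> k" using R_facts ij by auto
    have "pair_ok a b i j" using all f by auto
    then obtain ck c0 where e0: "M a b k i * M a b k j = p^2 * ck + (if i = j then p^2 * b i else 0)"
      "M a b 0 i * M a b 0 j = p^3 * c0 + (if i = j \<and> i \<in> R then p^2 * a i else 0) + p * a k * ck"
      unfolding pair_ok_def by blast
    hence e: "M a b k i * M a b k j = p^2 * ck"
      "M a b 0 i * M a b 0 j = p^3 * c0 + p * a k * ck" using ij(3) by auto
    have "p^2 * (b i * b j) = p^2 * ck" using e(1) beta f by (simp add: algebra_simps power2_eq_square)
    hence ck: "ck = b i * b j" using cancel2 by metis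
    have "p * (p * a i * a j - a k * b i * b j) = p * (p^2 * c0)"
      using e(2) alpha f ck by (simp add: algebra_simps power2_eq_square power3_eq_cube)
    hence "p * a i * a j - a k * b i * b j = p^2 * c0" using cancel1 by metis
    thus "p^2 dvd p * a i * a j - a k * b i * b j" by simp
  qed
  moreover have "\<forall>i\<in>R. p^2 dvd p * (a i^2 - a i) - a k * (b i^2 - b i)"
  proof
    fix i assume i: "i \<in> R"
    have f: "i < m" "i \<noteq> 0" "i \<noteq> k" using R_facts i by auto
    have "pair_ok a b i i" using all f by auto
    then obtain ck c0 where e0: "M a b k i * M a b k i = p^2 * ck + (if i = i then p^2 * b i else 0)"
      "M a b 0 i * M a b 0 i = p^3 * c0 + (if i = i \<and> i \<in> R then p^2 * a i else 0) + p * a k * ck"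
      unfolding pair_ok_def by blast
    hence e: "M a b k i * M a b k i = p^2 * ck + p^2 * b i"
      "M a b 0 i * M a b 0 i = p^3 * c0 + p^2 * a i + p * a k * ck" using i by auto
    have "p^2 * (b i * b i) = p^2 * (ck + b i)" using e(1) beta f by (simp add: algebra_simps power2_eq_square)
    hence ck: "ck = b i^2 - b i" using cancel2 by (simp add: power2_eq_square) (metis add_diff_cancel_right')
    have "p * (p * (a i^2 - a i) - a k * (b i^2 - b i)) = p * (p^2 * c0)"
      using e(2) alpha f ck by (simp add: algebra_simps power2_eq_square power3_eq_cube)
    hence "p * (a i^2 - a i) - a k * (b i^2 - b i) = p^2 * c0" using cancel1 by metis
    thus "p^2 dvd p * (a i^2 - a i) - a k * (b i^2 - b i)" by simp
  qed
  ultimately show ?thesis by (simp add: condI_def)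
qed

lemma dvd_p2: "p^2 dvd p * X \<Longrightarrow> \<exists>q. X = p * q"
proof -
  assume "p^2 dvd p * X"
  then obtain q where "p * X = p^2 * q" by (auto elim: dvdE)
  hence "p * X = p * (p * q)" by (simp add: power2_eq_square)
  hence "X = p * q" using cancel1 by blast
  thus ?thesis by blast
qed

lemma cond_imp_closure:
  assumes ab: "(a,b) \<in> dom" and c: "condI a b" and ij: "i < m" "j < m"
  shows "pair_ok a b i j"
proof -
  have dz: "b 0 = 0" "b k = 0" "a 0 = 0" using dom_zero[OF ab] by auto
  have "p dvd a k" using c by (simp add: condI_def)
  then obtain t where t: "a k = p * t" by (rule dvdE)
  have zR: "0 \<notin> R" by (simp add: R_def)
  have cases: "i = 0 \<or> j = 0 \<or> (i = k \<and> j = k) \<or> (i = k \<and> j \<in> R) \<or> (i \<in> R \<and> j = k) \<or> (i \<in> R \<and> j \<in> R)"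
    using ij by (auto simp: R_def)
  show ?thesis unfolding pair_ok_def
  proof -
    consider "i = 0" | "i \<noteq> 0" "j = 0" | "i = k" "j = k" | "i = k" "j \<in> R" | "i \<in> R" "j = k"
      | "i \<in> R" "j \<in> R" "i \<noteq> j" | "i \<in> R" "j = i" using cases by blast
    thus "\<exists>ck c0. M a b k i * M a b k j = p^2 * ck + (if i = j then p^2 * b i else 0) \<and>
      M a b 0 i * M a b 0 j = p^3 * c0 + (if i = j \<and> i \<in> R then p^2 * a i else 0) + p * a k * ck"
    proof cases
      case 1
      show ?thesis
        by (rule exI[of _ 0], rule exI[of _ "M a b 0 j"]) (use 1 ij dz zR k_facts in \<open>simp add: alpha beta\<close>)
    next
      case 2
      show ?thesis
        by (rule exI[of _ 0], rule exI[of _ "M a b 0 i"]) (use 2 ij dz zR k_facts in \<open>simp add: alpha beta\<close>)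
    next
      case 3
      show ?thesis
        by (rule exI[of _ "p^2"], rule exI[of _ "p * t^2 - p * t"])
          (use 3 ij dz kR k_facts t in \<open>simp add: alpha beta algebra_simps power2_eq_square power3_eq_cube\<close>)
    next
      case 4
      have f: "j \<noteq> 0" "j \<noteq> k" using R_facts 4 by auto
      show ?thesis
        by (rule exI[of _ "p * b j"], rule exI[of _ "t * a j - t * b j"])
          (use 4 f ij dz k_facts t in \<open>simp add: alpha beta algebra_simps power2_eq_square power3_eq_cube\<close>)
    next
      case 5
      have f: "i \<noteq> 0" "i \<noteq> k" using R_facts 5 by auto
      show ?thesis
        by (rule exI[of _ "p * b i"], rule exI[of _ "t * a i - t * b i"])
          (use 5 f ij dz k_facts t in \<open>simp add: alpha beta algebra_simps power2_eq_square power3_eq_cube\<close>)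
    next
      case 6
      have f: "i \<noteq> 0" "i \<noteq> k" "j \<noteq> 0" "j \<noteq> k" using R_facts 6 by auto
      have "p^2 dvd p * (a i * a j - t * b i * b j)"
        using c 6 t unfolding condI_def by (simp add: algebra_simps)
      then obtain q where q: "a i * a j - t * b i * b j = p * q" using dvd_p2 by blast
      show ?thesis
        by (rule exI[of _ "b i * b j"], rule exI[of _ q])
          (use 6 f ij t q in \<open>simp add: alpha beta algebra_simps power2_eq_square power3_eq_cube\<close>)
    next
      case 7
      have f: "i \<noteq> 0" "i \<noteq> k" using R_facts 7 by auto
      have "p^2 dvd p * (a i^2 - a i - t * (b i^2 - b i))"
        using c 7 t unfolding condI_def by (simp add: algebra_simps)
      then obtain q where q: "a i^2 - a i - t * (b i^2 - b i) = p * q" using dvd_p2 by blast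
      have q2: "a i * a i = a i + t * (b i * b i - b i) + p * q" using q by (simp add: power2_eq_square algebra_simps)
      have "M a b 0 i * M a b 0 j = p^2 * (a i * a i)" using 7 f ij by (simp add: alpha power2_eq_square)
      also have "\<dots> = p^3 * q + (if i = j \<and> i \<in> R then p^2 * a i else 0) + p * a k * (b i^2 - b i)"
        unfolding q2 using 7 t by (simp add: algebra_simps power2_eq_square power3_eq_cube)
      finally show ?thesis
        by (intro exI[of _ "b i^2 - b i"] exI[of _ q] conjI) (use 7 f ij in \<open>simp_all add: beta algebra_simps power2_eq_square\<close>)
    qed
  qed
qed

end

context mat begin

definition alk :: "nat list" where
  "alk = map (\<lambda>i. if i = 0 then 3 else if i = k then 2 else 1) [0..<m]"

lemma alk_len: "length alk = m" by (simp add: alk_def)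
lemma alk_nth: "r < m \<Longrightarrow> alk ! r = (if r = 0 then 3 else if r = k then 2 else 1)"
  by (simp add: alk_def)
lemma n_eq: "length alk + 1 = n" using alk_len k_facts by simp

definition V :: "((nat \<Rightarrow> int) \<times> (nat \<Rightarrow> int)) set" where
  "V = {(a,b). (a,b) \<in> dom \<and> condI a b}"

definition struct :: "(nat \<Rightarrow> nat \<Rightarrow> int) \<Rightarrow> bool" where
  "struct A \<longleftrightarrow> (\<forall>r s. (n \<le> r \<or> n \<le> s) \<longrightarrow> A r s = 0) \<and>
       (\<forall>r<n. \<forall>s<r. A r s = 0) \<and>
       (\<forall>r<n - 1. A r r = p ^ (alk ! r)) \<and>
       A (n - 1) (n - 1) = 1 \<and>
       (\<forall>r<n. A r (n - 1) = 1) \<and>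
       (\<forall>r s. r < s \<and> s < n - 1 \<longrightarrow> p dvd A r s \<and> 0 \<le> A r s \<and> A r s < p ^ (alk ! r))"

lemma irred_iff: "irred_subring_matrix alk pn A \<longleftrightarrow> struct A \<and> (\<forall>i<n. \<forall>j<n. in_col_span n A (\<lambda>r. A r i * A r j))"
  unfolding irred_subring_matrix_def struct_def Let_def n_eq by simp

lemma d_alk: "r < m \<Longrightarrow> d r = p ^ (alk ! r)"
  by (simp add: d_def alk_nth)

lemma struct_M: assumes ab: "(a,b) \<in> dom" shows "struct (M a b)"
proof -
  have dz: "\<And>s. s \<notin> R \<Longrightarrow> s \<noteq> k \<Longrightarrow> a s = 0" "\<And>s. s \<notin> Q \<Longrightarrow> b s = 0" "a 0 = 0" "a m = 0"
    "b 0 = 0" "b k = 0" "b m = 0" using dom_zero[OF ab] by auto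
  have ar: "\<And>s. 0 \<le> a s \<and> a s < p^2" using ab p2 by (auto simp: dom_def Fz_def)
  have br: "\<And>s. 0 \<le> b s \<and> b s < p" using ab p2 by (auto simp: dom_def Fz_def)
  have c1: "\<forall>r s. (n \<le> r \<or> n \<le> s) \<longrightarrow> M a b r s = 0" by (simp add: M_def)
  have c2: "\<forall>r<n. \<forall>s<r. M a b r s = 0"
  proof (intro allI impI)
    fix r s assume rs: "r < n" "s < r"
    have "s < m" using rs k_facts by simp
    hence e: "M a b r s = (if r = 0 then p * a s else 0) + (if r = k then p * b s else 0)"
      using col_entry[of r s a b] rs by simp
    have "r \<noteq> 0" using rs by simp
    moreover have "r = k \<Longrightarrow> b s = 0" using rs dz(2) by (auto simp: Q_def)
    ultimately show "M a b r s = 0" using e by simp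
  qed
  have c3: "\<forall>r<n - 1. M a b r r = p ^ (alk ! r)"
  proof (intro allI impI)
    fix r assume r: "r < n - 1"
    thus "M a b r r = p ^ (alk ! r)" using dz k_facts d_alk by (auto simp: M_def)
  qed
  have c4: "M a b (n - 1) (n - 1) = 1" using k_facts dz by (simp add: M_def)
  have c5: "\<forall>r<n. M a b r (n - 1) = 1" using dz k_facts by (auto simp: M_def)
  have c6: "\<forall>r s. r < s \<and> s < n - 1 \<longrightarrow> p dvd M a b r s \<and> 0 \<le> M a b r s \<and> M a b r s < p ^ (alk ! r)"
  proof (intro allI impI)
    fix r s assume rs: "r < s \<and> s < n - 1"
    have e: "M a b r s = (if r = 0 then p * a s else 0) + (if r = k then p * b s else 0)"
      using rs k_facts by (auto simp: M_def)
    show "p dvd M a b r s \<and> 0 \<le> M a b r s \<and> M a b r s < p ^ (alk ! r)"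
    proof (cases "r = 0")
      case True
      have "p * a s < p * p^2" using ar[of s] p2 by simp
      thus ?thesis using True e ar[of s] p2 alk_nth[of 0] k_facts by (simp add: power3_eq_cube power2_eq_square)
    next
      case False
      show ?thesis
      proof (cases "r = k")
        case True
        have "p * b s < p * p" using br[of s] p2 by simp
        thus ?thesis using True False e br[of s] p2 alk_nth[of k] k_facts by (simp add: power2_eq_square)
      next
        case False
        thus ?thesis using \<open>r \<noteq> 0\<close> e p2 by simp
      qed
    qed
  qed
  show ?thesis unfolding struct_def using c1 c2 c3 c4 c5 c6 by blast
qed

lemma struct_ex: assumes "struct A" shows "\<exists>a b. (a,b) \<in> dom \<and> A = M a b"
proof -
  have h1: "\<And>r s. (n \<le> r \<or> n \<le> s) \<Longrightarrow> A r s = 0" and h2: "\<And>r s. r < n \<Longrightarrow> s < r \<Longrightarrow> A r s = 0"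
    and h3: "\<And>r. r < m \<Longrightarrow> A r r = p ^ (alk ! r)" and h4: "A m m = 1"
    and h5: "\<And>r. r < n \<Longrightarrow> A r m = 1"
    and h6: "\<And>r s. r < s \<Longrightarrow> s < m \<Longrightarrow> p dvd A r s \<and> 0 \<le> A r s \<and> A r s < p ^ (alk ! r)"
    using assms unfolding struct_def by auto
  define a where "a s = (if s \<in> {1..<m} then A 0 s div p else 0)" for s
  define b where "b s = (if s \<in> Q then A k s div p else 0)" for s
  have ab: "(a,b) \<in> dom"
  proof -
    have "\<And>s. s \<in> {1..<m} \<Longrightarrow> 0 \<le> A 0 s div p \<and> A 0 s div p < p^2"
    proof -
      fix s assume s: "s \<in> {1..<m}"
      hence h: "p dvd A 0 s" "0 \<le> A 0 s" "A 0 s < p^3" using h6[of 0 s] alk_nth[of 0] k_facts by auto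
      obtain q where q: "A 0 s = p * q" using h(1) by (rule dvdE)
      have "0 \<le> q" using h(2) q p2 by (simp add: zero_le_mult_iff)
      moreover have "p * q < p * p^2" using h(3) q by (simp add: power3_eq_cube power2_eq_square)
      hence "q < p^2" using p2 by (simp add: mult_less_cancel_left)
      ultimately show "0 \<le> A 0 s div p \<and> A 0 s div p < p^2" using q p2 by simp
    qed
    moreover have "\<And>s. s \<in> Q \<Longrightarrow> 0 \<le> A k s div p \<and> A k s div p < p"
    proof -
      fix s assume s: "s \<in> Q"
      hence h: "p dvd A k s" "0 \<le> A k s" "A k s < p^2" using h6[of k s] alk_nth[of k] k_facts by (auto simp: Q_def)
      obtain q where q: "A k s = p * q" using h(1) by (rule dvdE)
      have "0 \<le> q" using h(2) q p2 by (simp add: zero_le_mult_iff)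
      moreover have "p * q < p * p" using h(3) q by (simp add: power2_eq_square)
      hence "q < p" using p2 by (simp add: mult_less_cancel_left)
      ultimately show "0 \<le> A k s div p \<and> A k s div p < p" using q p2 by simp
    qed
    ultimately show ?thesis by (auto simp: dom_def Fz_def a_def b_def)
  qed
  have "A = M a b"
  proof (intro ext)
    fix r s
    show "A r s = M a b r s"
    proof (cases "n \<le> r \<or> n \<le> s")
      case True thus ?thesis using h1 by (simp add: M_def)
    next
      case False
      hence rs: "r < n" "s < n" by auto
      show ?thesis
      proof (cases "s = m")
        case True thus ?thesis using h5 rs k_facts by (auto simp: M_def a_def b_def Q_def)
      next
        case sm: False
        hence sm': "s < m" using rs by simp
        show ?thesis
        proof (cases "s < r")
          case True thus ?thesis using h2 rs sm k_facts by (auto simp: M_def a_def b_def Q_def)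
        next
          case False
          show ?thesis
          proof (cases "s = r")
            case True thus ?thesis using h3 sm' d_alk k_facts by (auto simp: M_def a_def b_def Q_def)
          next
            case False
            hence rs2: "r < s" using \<open>\<not> s < r\<close> by simp
            have hh: "p dvd A r s \<and> 0 \<le> A r s \<and> A r s < p ^ (alk ! r)" using h6[OF rs2 sm'] .
            have e: "M a b r s = (if r = 0 then p * a s else 0) + (if r = k then p * b s else 0)"
              using rs2 sm' k_facts by (auto simp: M_def)
            show ?thesis
            proof (cases "r = 0")
              case True thus ?thesis using e hh rs2 sm' k_facts by (auto simp: a_def)
            next
              case r0: False
              show ?thesis
              proof (cases "r = k")
                case True thus ?thesis using e hh rs2 sm' r0 by (auto simp: b_def Q_def)
              next
                case False
                have "r < m" using rs2 sm' by simp
                hence "A r s < p" using hh alk_nth[of r] r0 False by simp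
                hence "A r s = 0" using hh dvd_range by blast
                thus ?thesis using e r0 False by simp
              qed
            qed
          qed
        qed
      qed
    qed
  qed
  thus ?thesis using ab by blast
qed

lemma closure_M: assumes ab: "(a,b) \<in> dom"
  shows "(\<forall>i<n. \<forall>j<n. in_col_span n (M a b) (\<lambda>r. M a b r i * M a b r j)) \<longleftrightarrow> condI a b"
proof
  assume "\<forall>i<n. \<forall>j<n. in_col_span n (M a b) (\<lambda>r. M a b r i * M a b r j)"
  hence "\<forall>i<m. \<forall>j<m. pair_ok a b i j" using span_prod[OF ab] k_facts by auto
  thus "condI a b" using closure_imp_cond[OF ab] by blast
next
  assume c: "condI a b"
  show "\<forall>i<n. \<forall>j<n. in_col_span n (M a b) (\<lambda>r. M a b r i * M a b r j)"
  proof (intro allI impI)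
    fix i j assume ij: "i < n" "j < n"
    have col: "\<And>l. l < n \<Longrightarrow> in_col_span n (M a b) (\<lambda>r. M a b r l)"
    proof -
      fix l assume l: "l < n"
      show "in_col_span n (M a b) (\<lambda>r. M a b r l)" unfolding in_col_span_def
      proof (rule exI[of _ "\<lambda>s. if s = l then 1 else 0"], intro allI impI)
        fix r assume "r < n"
        have "(\<Sum>s<n. (if s = l then 1 else 0) * M a b r s) = (\<Sum>s<n. (if s = l then M a b r l else 0))"
          by (rule sum.cong) auto
        thus "M a b r l = (\<Sum>s<n. (if s = l then 1 else 0) * M a b r s)" using l by simp
      qed
    qed
    show "in_col_span n (M a b) (\<lambda>r. M a b r i * M a b r j)"
    proof (cases "i = m \<or> j = m")
      case True
      have one: "\<And>r. r < n \<Longrightarrow> M a b r m = 1" using k_facts dom_zero[OF ab] by (auto simp: M_def)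
      show ?thesis
      proof (cases "i = m")
        case True
        have "in_col_span n (M a b) (\<lambda>r. M a b r j)" using col ij by blast
        thus ?thesis unfolding in_col_span_def using one True by simp
      next
        case False
        hence "j = m" using \<open>i = m \<or> j = m\<close> by simp
        have "in_col_span n (M a b) (\<lambda>r. M a b r i)" using col ij by blast
        thus ?thesis unfolding in_col_span_def using one \<open>j = m\<close> by simp
      qed
    next
      case False
      hence "i < m" "j < m" using ij by auto
      thus ?thesis using span_prod[OF ab] cond_imp_closure[OF ab c] by blast
    qed
  qed
qed

lemma irred_set: "{A. irred_subring_matrix alk pn A} = (\<lambda>(a,b). M a b) ` V"
proof (rule set_eqI, rule iffI)
  fix A assume "A \<in> {A. irred_subring_matrix alk pn A}"
  hence s: "struct A" and c: "\<forall>i<n. \<forall>j<n. in_col_span n A (\<lambda>r. A r i * A r j)" using irred_iff by auto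
  obtain a b where ab: "(a,b) \<in> dom" "A = M a b" using struct_ex[OF s] by blast
  have "condI a b" using closure_M[OF ab(1)] c ab(2) by simp
  thus "A \<in> (\<lambda>(a,b). M a b) ` V" using ab by (auto simp: V_def)
next
  fix A assume "A \<in> (\<lambda>(a,b). M a b) ` V"
  then obtain a b where ab: "(a,b) \<in> dom" "condI a b" "A = M a b" by (auto simp: V_def)
  show "A \<in> {A. irred_subring_matrix alk pn A}"
    using irred_iff struct_M[OF ab(1)] closure_M[OF ab(1)] ab(2,3) by simp
qed

lemma row0: "s \<in> {1..<m} \<Longrightarrow> M a b 0 s = p * a s"
  using col_entry[of 0 s a b] k_facts by simp
lemma rowk: "s \<in> Q \<Longrightarrow> M a b k s = p * b s"
  using col_entry[of k s a b] k_facts by (simp add: Q_def)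

lemma inj_M: "inj_on (\<lambda>(a,b). M a b) V"
proof (rule inj_onI)
  fix x y assume x: "x \<in> V" and y: "y \<in> V" and e: "(\<lambda>(a,b). M a b) x = (\<lambda>(a,b). M a b) y"
  obtain a b where xa: "x = (a,b)" by (cases x) auto
  obtain a' b' where ya: "y = (a',b')" by (cases y) auto
  have d1: "(a,b) \<in> dom" "(a',b') \<in> dom" using x y xa ya by (auto simp: V_def)
  have E: "M a b = M a' b'" using e xa ya by simp
  have "a = a'"
  proof
    fix s show "a s = a' s"
    proof (cases "s \<in> {1..<m}")
      case True
      have "M a b 0 s = M a' b' 0 s" using E by simp
      hence "p * a s = p * a' s" using True by (simp add: row0)
      thus ?thesis using cancel1 by blast
    next
      case False thus ?thesis using d1 by (auto simp: dom_def Fz_def)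
    qed
  qed
  moreover have "b = b'"
  proof
    fix s show "b s = b' s"
    proof (cases "s \<in> Q")
      case True
      have "M a b k s = M a' b' k s" using E by simp
      hence "p * b s = p * b' s" using True by (simp add: rowk)
      thus ?thesis using cancel1 by blast
    next
      case False thus ?thesis using d1 by (auto simp: dom_def Fz_def)
    qed
  qed
  ultimately show "x = y" using xa ya by simp
qed

lemma g_alk: "g alk pn = card V"
  unfolding g_def irred_set using inj_M by (rule card_image)

end

context mat begin

lemma R_split: "R = Pk \<union> Q" "Pk \<inter> Q = {}" using k_facts by (auto simp: R_def Pk_def Q_def)

lemma card_R: "card R = n - 3"
proof -
  have "card R = card {1..<m} - card {k}" unfolding R_def using k_facts by (subst card_Diff_subset) auto
  thus ?thesis using k_facts by simp
qed

definition condJ :: "(nat \<Rightarrow> int) \<Rightarrow> int \<Rightarrow> (nat \<Rightarrow> int) \<Rightarrow> bool" where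
  "condJ x u y \<longleftrightarrow> (\<forall>i\<in>R. \<forall>j\<in>R. i \<noteq> j \<longrightarrow> p dvd x i * x j - u * y i * y j) \<and>
     (\<forall>i\<in>R. p dvd x i ^ 2 - x i - u * (y i ^ 2 - y i))"

lemma condJ_iff: assumes "y \<in> Fz Q {0..<p}"
  shows "condJ x u y \<longleftrightarrow> condP Pk Q x \<and> solQ Q x u y"
proof -
  have yz: "\<And>i. i \<in> Pk \<Longrightarrow> y i = 0" using assms R_split by (auto simp: Fz_def)
  show ?thesis
  proof
    assume c: "condJ x u y"
    have "condP Pk Q x" unfolding condP_def
    proof (intro conjI ballI impI)
      fix i assume i: "i \<in> Pk"
      hence "p dvd x i ^ 2 - x i - u * (y i ^ 2 - y i)" using c R_split by (auto simp: condJ_def)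
      thus "p dvd x i ^ 2 - x i" using yz[OF i] by simp
    next
      fix i j assume "i \<in> Pk" "j \<in> Pk \<union> Q" "i \<noteq> j"
      hence "p dvd x i * x j - u * y i * y j" using c R_split by (auto simp: condJ_def)
      thus "p dvd x i * x j" using yz[OF \<open>i \<in> Pk\<close>] by simp
    qed
    moreover have "solQ Q x u y" using c R_split by (auto simp: condJ_def solQ_def)
    ultimately show "condP Pk Q x \<and> solQ Q x u y" by blast
  next
    assume c: "condP Pk Q x \<and> solQ Q x u y"
    show "condJ x u y" unfolding condJ_def
    proof (intro conjI ballI impI)
      fix i j assume ij: "i \<in> R" "j \<in> R" "i \<noteq> j"
      show "p dvd x i * x j - u * y i * y j"
      proof (cases "i \<in> Pk")
        case True
        hence "p dvd x i * x j" using c ij R_split by (auto simp: condP_def)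
        thus ?thesis using yz[OF True] by simp
      next
        case False
        show ?thesis
        proof (cases "j \<in> Pk")
          case True
          hence "p dvd x j * x i" using c ij R_split by (auto simp: condP_def)
          thus ?thesis using yz[OF True] by (simp add: mult.commute)
        next
          case False
          thus ?thesis using \<open>i \<notin> Pk\<close> c ij R_split by (auto simp: solQ_def)
        qed
      qed
    next
      fix i assume i: "i \<in> R"
      show "p dvd x i ^ 2 - x i - u * (y i ^ 2 - y i)"
      proof (cases "i \<in> Pk")
        case True thus ?thesis using c yz[OF True] by (auto simp: condP_def)
      next
        case False thus ?thesis using c i R_split by (auto simp: solQ_def)
      qed
    qed
  qed
qed

definition psi :: "((nat \<Rightarrow> int) \<times> int \<times> (nat \<Rightarrow> int)) \<times> (nat \<Rightarrow> int) \<Rightarrow> (nat \<Rightarrow> int) \<times> (nat \<Rightarrow> int)" where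
  "psi t = (case t of ((x,u,y),h) \<Rightarrow> (\<lambda>i. if i = k then p * u else x i + p * h i, y))"

lemma dvd_shift: assumes "p dvd A - B" shows "p dvd A \<longleftrightarrow> p dvd B"
proof
  assume "p dvd A"
  moreover have "B = A - (A - B)" by simp
  ultimately show "p dvd B" using assms by (metis dvd_diff)
next
  assume "p dvd B"
  moreover have "A = (A - B) + B" by simp
  ultimately show "p dvd A" using assms by (metis dvd_add)
qed

lemma p2_dvd: "p^2 dvd p * X \<longleftrightarrow> p dvd X"
  using pnz by (simp add: power2_eq_square)

lemma condI_psi:
  "condI (\<lambda>i. if i = k then p * u else x i + p * h i) y \<longleftrightarrow> condJ x u y"
proof -
  let ?a = "\<lambda>i. if i = k then p * u else x i + p * h i"
  have aR: "\<And>i. i \<in> R \<Longrightarrow> ?a i = x i + p * h i" using kR by auto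
  have e1: "\<And>i j. i \<in> R \<Longrightarrow> j \<in> R \<Longrightarrow> p^2 dvd p * ?a i * ?a j - ?a k * y i * y j \<longleftrightarrow> p dvd x i * x j - u * y i * y j"
  proof -
    fix i j assume "i \<in> R" "j \<in> R"
    hence "p * ?a i * ?a j - ?a k * y i * y j = p * ((x i + p * h i) * (x j + p * h j) - u * y i * y j)"
      using aR by (simp add: algebra_simps)
    hence "p^2 dvd p * ?a i * ?a j - ?a k * y i * y j \<longleftrightarrow> p dvd (x i + p * h i) * (x j + p * h j) - u * y i * y j"
      using p2_dvd by simp
    also have "\<dots> \<longleftrightarrow> p dvd x i * x j - u * y i * y j"
      by (rule dvd_shift) (simp add: algebra_simps)
    finally show "p^2 dvd p * ?a i * ?a j - ?a k * y i * y j \<longleftrightarrow> p dvd x i * x j - u * y i * y j" .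
  qed
  have e2: "\<And>i. i \<in> R \<Longrightarrow> p^2 dvd p * (?a i ^ 2 - ?a i) - ?a k * (y i ^ 2 - y i) \<longleftrightarrow> p dvd x i ^ 2 - x i - u * (y i ^ 2 - y i)"
  proof -
    fix i assume "i \<in> R"
    hence "p * (?a i ^ 2 - ?a i) - ?a k * (y i ^ 2 - y i) = p * ((x i + p * h i) ^ 2 - (x i + p * h i) - u * (y i ^ 2 - y i))"
      using aR by (simp add: algebra_simps)
    hence "p^2 dvd p * (?a i ^ 2 - ?a i) - ?a k * (y i ^ 2 - y i) \<longleftrightarrow> p dvd (x i + p * h i) ^ 2 - (x i + p * h i) - u * (y i ^ 2 - y i)"
      using p2_dvd by simp
    also have "\<dots> \<longleftrightarrow> p dvd x i ^ 2 - x i - u * (y i ^ 2 - y i)"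
      by (rule dvd_shift) (simp add: algebra_simps power2_eq_square)
    finally show "p^2 dvd p * (?a i ^ 2 - ?a i) - ?a k * (y i ^ 2 - y i) \<longleftrightarrow> p dvd x i ^ 2 - x i - u * (y i ^ 2 - y i)" .
  qed
  show ?thesis unfolding condI_def condJ_def using e1 e2 by simp
qed

lemma div_lt: assumes "0 < (q::int)" "x < q * q" shows "x div q < q"
proof (rule ccontr)
  assume "\<not> x div q < q"
  hence "q \<le> x div q" by simp
  hence "q * q \<le> q * (x div q)" using assms(1) by (intro mult_left_mono) auto
  also have "q * (x div q) = x - x mod q" by (simp add: minus_mod_eq_mult_div)
  also have "\<dots> \<le> x" using pos_mod_sign[OF assms(1), of x] by simp
  finally show False using assms(2) by simp
qed

lemma card_V: "card V = card (Vmod Pk Q) * pn ^ (n - 3)"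
proof -
  have "bij_betw psi (Vmod Pk Q \<times> Fz R {0..<p}) V"
  proof (rule bij_betw_byWitness[where f'="\<lambda>(a,b). ((\<lambda>i. if i \<in> R then a i mod p else 0, a k div p, b),
        (\<lambda>i. if i \<in> R then a i div p else 0))"])
    show "\<forall>t\<in>Vmod Pk Q \<times> Fz R {0..<p}. (\<lambda>(a,b). ((\<lambda>i. if i \<in> R then a i mod p else 0, a k div p, b),
        (\<lambda>i. if i \<in> R then a i div p else 0))) (psi t) = t"
    proof
      fix t assume t: "t \<in> Vmod Pk Q \<times> Fz R {0..<p}"
      obtain xuy h where t1: "t = (xuy,h)" by (cases t)
      obtain x u y where t2: "xuy = (x,u,y)" by (cases xuy)
      have tt: "t = ((x,u,y),h)" using t1 t2 by simp
      have h: "x \<in> Fz R {0..<p}" "u \<in> {0..<p}" "h \<in> Fz R {0..<p}"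
        using t tt R_split by (auto simp: Vmod_def)
      have "(\<lambda>i. if i \<in> R then (if i = k then p * u else x i + p * h i) mod p else 0) = x"
      proof
        fix i show "(if i \<in> R then (if i = k then p * u else x i + p * h i) mod p else 0) = x i"
          using h kR by (cases "i \<in> R") (auto simp: Fz_def)
      qed
      moreover have "(\<lambda>i. if i \<in> R then (if i = k then p * u else x i + p * h i) div p else 0) = h"
      proof
        fix i show "(if i \<in> R then (if i = k then p * u else x i + p * h i) div p else 0) = h i"
          using h kR pnz by (cases "i \<in> R") (auto simp: Fz_def)
      qed
      moreover have "(p * u) div p = u" using pnz by simp
      ultimately show "(\<lambda>(a,b). ((\<lambda>i. if i \<in> R then a i mod p else 0, a k div p, b),
        (\<lambda>i. if i \<in> R then a i div p else 0))) (psi t) = t" using tt by (simp add: psi_def)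
    qed
    show "\<forall>s\<in>V. psi ((\<lambda>(a,b). ((\<lambda>i. if i \<in> R then a i mod p else 0, a k div p, b),
        (\<lambda>i. if i \<in> R then a i div p else 0))) s) = s"
    proof
      fix s assume s: "s \<in> V"
      obtain a b where ss: "s = (a,b)" by (cases s) auto
      have ab: "(a,b) \<in> dom" "condI a b" using s ss by (auto simp: V_def)
      have "p dvd a k" using ab(2) by (simp add: condI_def)
      have "(\<lambda>i. if i = k then p * (a k div p) else (if i \<in> R then a i mod p else 0) + p * (if i \<in> R then a i div p else 0)) = a"
      proof
        fix i show "(if i = k then p * (a k div p) else (if i \<in> R then a i mod p else 0) + p * (if i \<in> R then a i div p else 0)) = a i"
        proof (cases "i = k")
          case True thus ?thesis using \<open>p dvd a k\<close> by simp
        next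
          case False
          thus ?thesis using dom_zero(1)[OF ab(1), of i] by (cases "i \<in> R") (auto simp: mult.commute)
        qed
      qed
      thus "psi ((\<lambda>(a,b). ((\<lambda>i. if i \<in> R then a i mod p else 0, a k div p, b),
        (\<lambda>i. if i \<in> R then a i div p else 0))) s) = s" using ss by (simp add: psi_def)
    qed
    show "psi ` (Vmod Pk Q \<times> Fz R {0..<p}) \<subseteq> V"
    proof
      fix s assume "s \<in> psi ` (Vmod Pk Q \<times> Fz R {0..<p})"
      then obtain t where t: "s = psi t" "t \<in> Vmod Pk Q \<times> Fz R {0..<p}" by blast
      obtain xuy h where t1: "t = (xuy,h)" by (cases t)
      obtain x u y where t2: "xuy = (x,u,y)" by (cases xuy)
      have tt: "s = psi ((x,u,y),h)" "((x,u,y),h) \<in> Vmod Pk Q \<times> Fz R {0..<p}" using t t1 t2 by auto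
      have h: "x \<in> Fz R {0..<p}" "u \<in> {0..<p}" "y \<in> Fz Q {0..<p}" "h \<in> Fz R {0..<p}"
        "condP Pk Q x" "solQ Q x u y" using tt(2) R_split by (auto simp: Vmod_def)
      have cJ: "condJ x u y" using condJ_iff[OF h(3)] h by blast
      have "(\<lambda>i. if i = k then p * u else x i + p * h i) \<in> Fz {1..<m} {0..<p^2}"
        unfolding Fz_def
      proof (intro CollectI conjI allI impI ballI)
        fix i assume i: "i \<in> {1..<m}"
        show "(if i = k then p * u else x i + p * h i) \<in> {0..<p^2}"
        proof (cases "i = k")
          case True thus ?thesis using h(2) p2 by (auto simp: power2_eq_square)
        next
          case False
          hence "i \<in> R" using i by (auto simp: R_def)
          hence r: "0 \<le> x i" "x i < p" "0 \<le> h i" "h i \<le> p - 1" using h(1,4) by (auto simp: Fz_def)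
          have "p * h i \<le> p * (p - 1)" using r(4) p2 by (intro mult_left_mono) auto
          hence "x i + p * h i < p^2" using r(2) by (simp add: power2_eq_square algebra_simps)
          thus ?thesis using False r p2 by simp
        qed
      next
        fix i assume i: "i \<notin> {1..<m}"
        hence "i \<notin> R" "i \<noteq> k" using k_facts by (auto simp: R_def)
        thus "(if i = k then p * u else x i + p * h i) = 0" using h(1,4) by (auto simp: Fz_def)
      qed
      hence "((\<lambda>i. if i = k then p * u else x i + p * h i), y) \<in> dom" using h(3) by (simp add: dom_def)
      moreover have "condI (\<lambda>i. if i = k then p * u else x i + p * h i) y" using condI_psi cJ by blast
      ultimately show "s \<in> V" using tt(1) by (simp add: psi_def V_def)
    qed
    show "(\<lambda>(a,b). ((\<lambda>i. if i \<in> R then a i mod p else 0, a k div p, b),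
        (\<lambda>i. if i \<in> R then a i div p else 0))) ` V \<subseteq> Vmod Pk Q \<times> Fz R {0..<p}"
    proof
      fix t assume "t \<in> (\<lambda>(a,b). ((\<lambda>i. if i \<in> R then a i mod p else 0, a k div p, b),
        (\<lambda>i. if i \<in> R then a i div p else 0))) ` V"
      then obtain a b where ab: "(a,b) \<in> V" "t = ((\<lambda>i. if i \<in> R then a i mod p else 0, a k div p, b),
        (\<lambda>i. if i \<in> R then a i div p else 0))" by auto
      have d: "(a,b) \<in> dom" "condI a b" using ab by (auto simp: V_def)
      have ar: "\<And>i. 0 \<le> a i \<and> a i < p^2" using d(1) p2 by (auto simp: dom_def Fz_def)
      have "p dvd a k" using d(2) by (simp add: condI_def)
      define x where "x = (\<lambda>i. if i \<in> R then a i mod p else 0)"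
      define h where "h = (\<lambda>i. if i \<in> R then a i div p else 0)"
      define u where "u = a k div p"
      have "a = (\<lambda>i. if i = k then p * u else x i + p * h i)"
      proof
        fix i show "a i = (if i = k then p * u else x i + p * h i)"
        proof (cases "i = k")
          case True thus ?thesis using \<open>p dvd a k\<close> by (simp add: u_def)
        next
          case False
          thus ?thesis using dom_zero(1)[OF d(1), of i] by (cases "i \<in> R") (auto simp: x_def h_def mult.commute)
        qed
      qed
      hence "condI (\<lambda>i. if i = k then p * u else x i + p * h i) b" using d(2) by simp
      hence cJ: "condJ x u b" using condI_psi by blast
      have xr: "x \<in> Fz R {0..<p}" using p2 by (auto simp: x_def Fz_def)
      have hr: "h \<in> Fz R {0..<p}"
      proof -
        have "\<And>i. 0 \<le> a i div p \<and> a i div p < p"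
        proof -
          fix i
          have "a i < p * p" using ar[of i] by (simp add: power2_eq_square)
          moreover have "0 < p" using p2 by simp
          ultimately show "0 \<le> a i div p \<and> a i div p < p" using ar[of i] div_lt
            by (simp add: pos_imp_zdiv_nonneg_iff)
        qed
        thus ?thesis by (auto simp: h_def Fz_def)
      qed
      have ur: "u \<in> {0..<p}"
      proof -
        have "a k < p * p" using ar[of k] by (simp add: power2_eq_square)
        moreover have "0 < p" using p2 by simp
        ultimately show ?thesis using ar[of k] div_lt by (simp add: u_def pos_imp_zdiv_nonneg_iff)
      qed
      have br: "b \<in> Fz Q {0..<p}" using d(1) by (simp add: dom_def)
      have "condP Pk Q x \<and> solQ Q x u b" using condJ_iff[OF br] cJ by blast
      moreover have "x \<in> Fz (Pk \<union> Q) {0..<p}" using xr R_split by simp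
      ultimately have "(x,u,b) \<in> Vmod Pk Q" using ur br by (simp add: Vmod_def)
      thus "t \<in> Vmod Pk Q \<times> Fz R {0..<p}" using ab(2) hr by (simp add: x_def u_def h_def)
    qed
  qed
  hence "card V = card (Vmod Pk Q \<times> Fz R {0..<p})" by (simp add: bij_betw_same_card)
  also have "\<dots> = card (Vmod Pk Q) * card (Fz R {0..<p})" by (rule card_cartesian_product)
  also have "card (Fz R {0..<p}) = pn ^ (n - 3)"
    using card_Fz[of R "{0..<p}"] card_R by (simp add: R_def)
  finally show ?thesis .
qed

end

definition Dr :: "real \<Rightarrow> nat \<Rightarrow> real" where
  "Dr p B = (real B + 2) * p^B + (p - 2) + real B * (p^2 - 2*p + 2) + real B * (real B - 1) / 2 * (p^2 - 3*p + 4)"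

definition Er :: "real \<Rightarrow> nat \<Rightarrow> real" where
  "Er p B = p^B + (p - 1) * (real B + 1)"

lemma G_closed: "2 * (p - 1) * (\<Sum>B\<le>N. Er p B) = 2 * (p^(N+1) - 1) + (p - 1)^2 * (real N + 1) * (real N + 2)"
proof (induction N)
  case 0 thus ?case by (simp add: Er_def power2_eq_square algebra_simps)
next
  case (Suc N)
  have "2 * (p - 1) * (\<Sum>B\<le>Suc N. Er p B) = 2 * (p - 1) * (\<Sum>B\<le>N. Er p B) + 2 * (p - 1) * Er p (Suc N)"
    by (simp add: algebra_simps)
  also have "\<dots> = 2 * (p^(N+1) - 1) + (p - 1)^2 * (real N + 1) * (real N + 2) + 2 * (p - 1) * Er p (Suc N)"
    using Suc by simp
  also have "\<dots> = 2 * (p^(Suc N+1) - 1) + (p - 1)^2 * (real (Suc N) + 1) * (real (Suc N) + 2)"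
    by (simp add: Er_def power2_eq_square algebra_simps)
  finally show ?case .
qed

definition RHS :: "real \<Rightarrow> nat \<Rightarrow> real" where
  "RHS p N = 6 * (real N + 2) * p^(N+1) + (real N + 2) * (real N + 1) * real N * p^3
     - 3 * (real N + 2) * (real N + 1) * (real N - 1) * p^2 + (real N + 2) * (real N + 1) * (5 * real N - 9) * p
     - 3 * (real N + 2) * real N * (real N - 1)"

lemma S_closed: "6 * (p - 1) * (\<Sum>B\<le>N. Dr p B + (real N - real B) * Er p B) = RHS p N"
proof (induction N)
  case 0 thus ?case by (simp add: Dr_def Er_def RHS_def algebra_simps power2_eq_square power3_eq_cube)
next
  case (Suc N)
  have e: "(\<Sum>B\<le>Suc N. Dr p B + (real (Suc N) - real B) * Er p B)
      = (\<Sum>B\<le>N. Dr p B + (real N - real B) * Er p B) + (\<Sum>B\<le>N. Er p B) + Dr p (Suc N)"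
  proof -
    have "(\<Sum>B\<le>Suc N. Dr p B + (real (Suc N) - real B) * Er p B)
        = (\<Sum>B\<le>N. Dr p B + (real (Suc N) - real B) * Er p B) + Dr p (Suc N)" by simp
    also have "(\<Sum>B\<le>N. Dr p B + (real (Suc N) - real B) * Er p B)
        = (\<Sum>B\<le>N. (Dr p B + (real N - real B) * Er p B) + Er p B)"
      by (rule sum.cong) (auto simp: algebra_simps)
    also have "\<dots> = (\<Sum>B\<le>N. Dr p B + (real N - real B) * Er p B) + (\<Sum>B\<le>N. Er p B)"
      by (simp add: sum.distrib)
    finally show ?thesis .
  qed
  have "6 * (p - 1) * (\<Sum>B\<le>Suc N. Dr p B + (real (Suc N) - real B) * Er p B)
     = RHS p N + 3 * (2 * (p - 1) * (\<Sum>B\<le>N. Er p B)) + 6 * (p - 1) * Dr p (Suc N)"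
    unfolding e using Suc by (simp add: algebra_simps)
  also have "\<dots> = RHS p N + 3 * (2 * (p^(N+1) - 1) + (p - 1)^2 * (real N + 1) * (real N + 2)) + 6 * (p - 1) * Dr p (Suc N)"
    using G_closed by simp
  also have "\<dots> = RHS p (Suc N)"
    by (simp add: Dr_def RHS_def field_simps power2_eq_square power3_eq_cube)
  finally show ?case .
qed

context mat begin

lemma card_Q: "card Q = n - 2 - k" by (simp add: Q_def)
lemma card_Pk: "card Pk = k - 1" by (simp add: Pk_def)

lemma g_real: "real (g alk pn) = real pn ^ (n - 3) * (Dr (real pn) (n - 2 - k) + real (k - 1) * Er (real pn) (n - 2 - k))"
proof -
  have fQ: "finite Q" "finite Pk" by (simp_all add: Q_def Pk_def)
  have "g alk pn = (card (Dset Q) + card Pk * card (Eset Q)) * pn ^ (n - 3)"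
    using g_alk card_V card_Vmod[OF fQ(2) fQ(1) R_split(2)] by simp
  hence g1: "real (g alk pn) = real pn ^ (n - 3) * (real (card (Dset Q)) + real (card Pk) * real (card (Eset Q)))"
    by (simp add: algebra_simps)
  let ?B = "n - 2 - k"
  have "real_of_int (2 * int (card (Dset Q))) = real_of_int (2 * (int (card Q) + 2) * p ^ card Q + 2 * (p - 2)
     + 2 * int (card Q) * (p^2 - 2*p + 2) + (int (card Q) * int (card Q) - int (card Q)) * (p^2 - 3*p + 4))"
    using card_Dset[OF fQ(1)] by simp
  hence "2 * real (card (Dset Q)) = 2 * (real ?B + 2) * real pn ^ ?B + 2 * (real pn - 2)
     + 2 * real ?B * (real pn^2 - 2*real pn + 2) + (real ?B * real ?B - real ?B) * (real pn^2 - 3*real pn + 4)"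
    unfolding card_Q by simp
  hence d: "real (card (Dset Q)) = Dr (real pn) ?B" unfolding Dr_def by (simp add: field_simps)
  have "real_of_int (int (card (Eset Q))) = real_of_int (p ^ card Q + (p - 1) * (int (card Q) + 1))"
    using card_Eset[OF fQ(1)] by simp
  hence e: "real (card (Eset Q)) = Er (real pn) ?B" unfolding card_Q Er_def by simp
  show ?thesis using g1 d e card_Pk by simp
qed

end

definition alkf :: "nat \<Rightarrow> nat \<Rightarrow> nat list" where
  "alkf n k = map (\<lambda>i. if i = 0 then 3 else if i = k then 2 else 1) [0..<n - 1]"

lemma S32_eq: assumes "3 \<le> n" shows "S32 n = alkf n ` {1..n-2}"
proof (rule set_eqI, rule iffI)
  fix \<alpha> assume "\<alpha> \<in> S32 n"
  then obtain k where h: "length \<alpha> = n - 1" "\<alpha> ! 0 = 3" "k \<in> {1..n-2}" "\<alpha> ! k = 2"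
    "\<forall>i<n - 1. i \<noteq> 0 \<and> i \<noteq> k \<longrightarrow> \<alpha> ! i = 1" unfolding S32_def by blast
  have "\<alpha> = alkf n k"
  proof (rule nth_equalityI)
    show "length \<alpha> = length (alkf n k)" using h by (simp add: alkf_def)
    fix i assume "i < length \<alpha>"
    thus "\<alpha> ! i = alkf n k ! i" using h by (auto simp: alkf_def)
  qed
  thus "\<alpha> \<in> alkf n ` {1..n-2}" using h by blast
next
  fix \<alpha> assume "\<alpha> \<in> alkf n ` {1..n-2}"
  then obtain k where k: "k \<in> {1..n-2}" "\<alpha> = alkf n k" by blast
  have "is_composition \<alpha>" using k by (auto simp: is_composition_def alkf_def)
  moreover have "length \<alpha> = n - 1" "\<alpha> ! 0 = 3" "\<alpha> ! k = 2" "\<forall>i<n - 1. i \<noteq> 0 \<and> i \<noteq> k \<longrightarrow> \<alpha> ! i = 1"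
    using k assms by (auto simp: alkf_def)
  ultimately show "\<alpha> \<in> S32 n" unfolding S32_def using k(1) by blast
qed

lemma alkf_inj: assumes "3 \<le> n" shows "inj_on (alkf n) {1..n-2}"
proof (rule inj_onI)
  fix k k' assume k: "k \<in> {1..n-2}" "k' \<in> {1..n-2}" "alkf n k = alkf n k'"
  hence "alkf n k ! k = alkf n k' ! k" by simp
  thus "k = k'" using k assms by (auto simp: alkf_def split: if_splits)
qed

theorem corollary4p7:
  fixes n p :: nat
  assumes "n \<ge> 3" and "prime p"
  shows "real (\<Sum>\<alpha>\<in>S32 n. g \<alpha> p) =
    1 / (6 * (real p - 1)) *
      (6 * (real n - 1) * real p ^ (2 * n - 5)
       + (real n - 1) * (real n - 2) * (real n - 3) * real p ^ n
       - 3 * (real n - 1) * (real n - 2) * (real n - 4) * real p ^ (n - 1)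
       + (real n - 1) * (real n - 2) * (5 * real n - 24) * real p ^ (n - 2)
       - 3 * (real n - 1) * (real n - 3) * (real n - 4) * real p ^ (n - 3))"
proof -
  have pi: "prime (int p)" using assms(2) by simp
  have p2: "2 \<le> p" using assms(2) prime_ge_2_nat by blast
  have matk: "\<And>k. k \<in> {1..n-2} \<Longrightarrow> mat p n k"
    using assms pi by (unfold_locales) auto
  have galk: "\<And>k. k \<in> {1..n-2} \<Longrightarrow> mat.alk n k = alkf n k"
  proof -
    fix k assume "k \<in> {1..n-2}"
    thus "mat.alk n k = alkf n k" using mat.alk_def[OF matk] by (simp add: alkf_def)
  qed
  obtain N where N: "n = N + 3" using assms(1) by (metis add.commute le_Suc_ex)
  have "(\<Sum>\<alpha>\<in>S32 n. g \<alpha> p) = (\<Sum>k\<in>{1..n-2}. g (alkf n k) p)"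
    unfolding S32_eq[OF assms(1)] by (rule sum.reindex[OF alkf_inj[OF assms(1)], unfolded comp_def])
  hence "real (\<Sum>\<alpha>\<in>S32 n. g \<alpha> p) = (\<Sum>k\<in>{1..n-2}. real (g (alkf n k) p))" by simp
  also have "\<dots> = (\<Sum>k\<in>{1..n-2}. real p ^ (n - 3) * (Dr (real p) (n - 2 - k) + real (k - 1) * Er (real p) (n - 2 - k)))"
  proof (rule sum.cong)
    fix k assume k: "k \<in> {1..n-2}"
    show "real (g (alkf n k) p) = real p ^ (n - 3) * (Dr (real p) (n - 2 - k) + real (k - 1) * Er (real p) (n - 2 - k))"
      using mat.g_real[OF matk[OF k]] galk[OF k] by simp
  qed simp
  also have "\<dots> = real p ^ N * (\<Sum>B\<le>N. Dr (real p) B + (real N - real B) * Er (real p) B)"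
  proof -
    have eq: "(\<Sum>k\<in>{1..n-2}. Dr (real p) (n - 2 - k) + real (k - 1) * Er (real p) (n - 2 - k))
        = (\<Sum>B\<le>N. Dr (real p) B + (real N - real B) * Er (real p) B)"
    proof (rule sum.reindex_bij_witness[where i="\<lambda>B. N + 1 - B" and j="\<lambda>k. N + 1 - k"])
      fix k assume "k \<in> {1..n-2}" thus "N + 1 - (N + 1 - k) = k" "N + 1 - k \<in> {..N}" using N by auto
    next
      fix B assume "B \<in> {..N}" thus "N + 1 - (N + 1 - B) = B" "N + 1 - B \<in> {1..n-2}" using N by auto
    next
      fix k assume k: "k \<in> {1..n-2}"
      have "n - 2 - k = N + 1 - k" using N by simp
      moreover have "real N - real (N + 1 - k) = real (k - 1)" using k N by (simp add: of_nat_diff)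
      ultimately show "Dr (real p) (N + 1 - k) + (real N - real (N + 1 - k)) * Er (real p) (N + 1 - k)
        = Dr (real p) (n - 2 - k) + real (k - 1) * Er (real p) (n - 2 - k)" by simp
    qed
    have "(\<Sum>k\<in>{1..n-2}. real p ^ (n - 3) * (Dr (real p) (n - 2 - k) + real (k - 1) * Er (real p) (n - 2 - k)))
       = real p ^ (n - 3) * (\<Sum>k\<in>{1..n-2}. Dr (real p) (n - 2 - k) + real (k - 1) * Er (real p) (n - 2 - k))"
      by (rule sum_distrib_left[symmetric])
    also have "\<dots> = real p ^ N * (\<Sum>B\<le>N. Dr (real p) B + (real N - real B) * Er (real p) B)"
      unfolding eq using N by simp
    finally show ?thesis .
  qed
  also have "\<dots> = real p ^ N * RHS (real p) N / (6 * (real p - 1))"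
  proof -
    have "real p - 1 \<noteq> 0" using p2 by simp
    thus ?thesis using S_closed[of "real p" N] by (simp add: field_simps)
  qed
  also have "\<dots> = 1 / (6 * (real p - 1)) *
      (6 * (real n - 1) * real p ^ (2 * n - 5)
       + (real n - 1) * (real n - 2) * (real n - 3) * real p ^ n
       - 3 * (real n - 1) * (real n - 2) * (real n - 4) * real p ^ (n - 1)
       + (real n - 1) * (real n - 2) * (5 * real n - 24) * real p ^ (n - 2)
       - 3 * (real n - 1) * (real n - 3) * (real n - 4) * real p ^ (n - 3))"
  proof -
    have ex: "real p ^ (2 * n - 5) = real p ^ N * real p ^ (N + 1)" "real p ^ n = real p ^ N * real p ^ 3"
      "real p ^ (n - 1) = real p ^ N * real p ^ 2" "real p ^ (n - 2) = real p ^ N * real p"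
      "real p ^ (n - 3) = real p ^ N" "real n = real N + 3"
    proof -
      have e1: "2 * n - 5 = N + (N + 1)" "n = N + 3" "n - 1 = N + 2" "n - 2 = N + 1" "n - 3 = N" using N by auto
      show "real p ^ (2 * n - 5) = real p ^ N * real p ^ (N + 1)" unfolding e1(1) by (rule power_add)
      show "real p ^ n = real p ^ N * real p ^ 3" unfolding e1(2) by (rule power_add)
      show "real p ^ (n - 1) = real p ^ N * real p ^ 2" unfolding e1(3) by (rule power_add)
      show "real p ^ (n - 2) = real p ^ N * real p" unfolding e1(4) by simp
      show "real p ^ (n - 3) = real p ^ N" unfolding e1(5) by simp
      show "real n = real N + 3" using N by simp
    qed
    have "real p ^ N * RHS (real p) N =
      (6 * (real n - 1) * real p ^ (2 * n - 5)
       + (real n - 1) * (real n - 2) * (real n - 3) * real p ^ n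
       - 3 * (real n - 1) * (real n - 2) * (real n - 4) * real p ^ (n - 1)
       + (real n - 1) * (real n - 2) * (5 * real n - 24) * real p ^ (n - 2)
       - 3 * (real n - 1) * (real n - 3) * (real n - 4) * real p ^ (n - 3))"
      unfolding ex RHS_def by (simp add: algebra_simps)
    thus ?thesis by simp
  qed
  finally show ?thesis .
qed

end
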